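(* Let $n\in\mathbb{N}$, $\hbar\in{]0,\infty[}$, $k\in\mathbb{N}$ and $f\in\mathscr{P}^{k,0}(\mathbb{C}^{1+n})$. Then $f\overline{f}\in(\mathcal{B}_\hbar)^{++}_{\mathrm H}+(\langle\mathcal{J}-\hbar(k-1)\rangle)_{\mathrm H}$, where $f\overline{f}$ is the pointwise product.
   Context: $\mathscr{P}^{k,\ell}(\mathbb{C}^{1+n})$ is the span of $z^K\overline{z}^L$ ($|K|=k$, $|L|=\ell$); $\mathscr{P}^{k,0}$ consists of $k$-homogeneous holomorphic polynomials. Wick product: $f\star_\hbar g=\sum_K\frac{\hbar^{|K|}}{K!}\frac{\partial^{|K|}f}{\partial\overline{z}^K}\frac{\partial^{|K|}g}{\partial z^K}$, involution pointwise conjugation. $\mathcal{B}_\hbar=\bigoplus_m\mathscr{P}^{m,m}(\mathbb{C}^{1+n})$ with $\star_\hbar$; $(\mathcal{B}_\hbar)^{++}_{\mathrm H}$ = finite sums $\sum\overline{g_j}\star_\hbar g_j$, $g_j\in\mathcal{B}_\hbar$. $\mathcal{J}=\sum_jz_j\overline{z_j}$; $\langle\mathcal{J}-\nu\rangle$ is the $^*$-ideal of $\mathcal{B}_\hbar$ generated by $\mathcal{J}-\nu\mathbb{1}$; $(\cdot)_{\mathrm H}$ denotes Hermitian (real-valued) elements. *)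

theory Defs
  imports Complex_Main
begin

text \<open>The 1+n coordinates are indexed by an
  arbitrary (nonempty) finite type 'i. A polynomial sum c_(K,L) z^K zbar^L is represented
  by its coefficient function on pairs of multi-indices (K,L).\<close>

type_synonym 'i mon = "('i \<Rightarrow> nat) \<times> ('i \<Rightarrow> nat)"
type_synonym 'i cpoly = "'i mon \<Rightarrow> complex"

definition supp :: "'i cpoly \<Rightarrow> 'i mon set" where
  "supp p = {m. p m \<noteq> 0}"

definition mdeg :: "('i::finite \<Rightarrow> nat) \<Rightarrow> nat" where
  "mdeg K = (\<Sum>i\<in>UNIV. K i)"

definition mfact :: "('i::finite \<Rightarrow> nat) \<Rightarrow> nat" where
  "mfact K = (\<Prod>i\<in>UNIV. fact (K i))"

definition Pkl :: "nat \<Rightarrow> nat \<Rightarrow> ('i::finite) cpoly set" where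
  "Pkl k l = {p. finite (supp p) \<and> (\<forall>K L. p (K, L) \<noteq> 0 \<longrightarrow> mdeg K = k \<and> mdeg L = l)}"

text \<open>The carrier of B_hbar: direct sum of the P^{m,m}.\<close>
definition Bset :: "('i::finite) cpoly set" where
  "Bset = {p. finite (supp p) \<and> (\<forall>K L. p (K, L) \<noteq> 0 \<longrightarrow> mdeg K = mdeg L)}"

definition pmult :: "('i::finite) cpoly \<Rightarrow> 'i cpoly \<Rightarrow> 'i cpoly" where
  "pmult p q = (\<lambda>(P, Q). \<Sum>a\<in>supp p. \<Sum>b\<in>supp q.
      if (\<lambda>i. fst a i + fst b i) = P \<and> (\<lambda>i. snd a i + snd b i) = Q
      then p a * q b else 0)"

text \<open>Involution: pointwise complex conjugation of the function,
  i.e. conj(sum c z^K zbar^L) = sum conj(c) z^L zbar^K.\<close>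
definition cstar :: "('i::finite) cpoly \<Rightarrow> 'i cpoly" where
  "cstar p = (\<lambda>(K, L). cnj (p (L, K)))"

text \<open>Wick product f *_h g = sum_M h^|M|/M! (d^M f / d zbar^M) (d^M g / d z^M), computed on
  monomials: d^M/d zbar^M (z^A zbar^B) = prod_i B_i!/(B_i-M_i)! z^A zbar^(B-M) for M <= B.\<close>
definition wick :: "real \<Rightarrow> ('i::finite) cpoly \<Rightarrow> 'i cpoly \<Rightarrow> 'i cpoly" where
  "wick h p q = (\<lambda>(P, Q). \<Sum>a\<in>supp p. \<Sum>b\<in>supp q.
      \<Sum>M\<in>{M. \<forall>i. M i \<le> snd a i \<and> M i \<le> fst b i}.
        if (\<lambda>i. fst a i + fst b i - M i) = P \<and> (\<lambda>i. snd a i - M i + snd b i) = Q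
        then complex_of_real (h ^ mdeg M) / of_nat (mfact M)
             * (\<Prod>i\<in>UNIV. of_nat (fact (snd a i)) / of_nat (fact (snd a i - M i)))
             * (\<Prod>i\<in>UNIV. of_nat (fact (fst b i)) / of_nat (fact (fst b i - M i)))
             * p a * q b
        else 0)"

definition one_poly :: "('i::finite) cpoly" where
  "one_poly = (\<lambda>m. if m = ((\<lambda>_. 0), (\<lambda>_. 0)) then 1 else 0)"

definition Jpoly :: "('i::finite) cpoly" where
  "Jpoly = (\<lambda>(K, L). if K = L \<and> mdeg K = 1 then 1 else 0)"

inductive_set pos_cone :: "real \<Rightarrow> ('i::finite) cpoly set" for h where
  pc_zero: "(\<lambda>_. 0) \<in> pos_cone h"
| pc_step: "p \<in> pos_cone h \<Longrightarrow> g \<in> Bset \<Longrightarrow> (\<lambda>m. p m + wick h (cstar g) g m) \<in> pos_cone h"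

inductive_set star_ideal :: "real \<Rightarrow> ('i::finite) cpoly \<Rightarrow> 'i cpoly set" for h x where
  si_gen: "x \<in> star_ideal h x"
| si_add: "a \<in> star_ideal h x \<Longrightarrow> b \<in> star_ideal h x \<Longrightarrow> (\<lambda>m. a m + b m) \<in> star_ideal h x"
| si_left: "c \<in> Bset \<Longrightarrow> a \<in> star_ideal h x \<Longrightarrow> wick h c a \<in> star_ideal h x"
| si_right: "c \<in> Bset \<Longrightarrow> a \<in> star_ideal h x \<Longrightarrow> wick h a c \<in> star_ideal h x"
| si_star: "a \<in> star_ideal h x \<Longrightarrow> cstar a \<in> star_ideal h x"

definition herm :: "('i::finite) cpoly set \<Rightarrow> 'i cpoly set" where
  "herm S = {p \<in> S. cstar p = p}"

end

theory Submission
  imports Defs "HOL-Computational_Algebra.Formal_Power_Series"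
begin

definition MS :: "'i set \<Rightarrow> nat \<Rightarrow> ('i \<Rightarrow> nat) set" where
  "MS S s = {M. (\<forall>i. i \<notin> S \<longrightarrow> M i = 0) \<and> sum M S = s}"

lemma finite_MS: assumes "finite S" shows "finite (MS S s)"
proof -
  have "MS S s \<subseteq> {M. \<forall>x. (x \<in> S \<longrightarrow> M x \<in> {..s}) \<and> (x \<notin> S \<longrightarrow> M x = 0)}"
    using assms by (auto simp: MS_def intro: member_le_sum)
  moreover have "finite {M. \<forall>x. (x \<in> S \<longrightarrow> M x \<in> {..s}) \<and> (x \<notin> S \<longrightarrow> M x = (0::nat))}"
    by (rule finite_set_of_finite_funs) (use assms in auto)
  ultimately show ?thesis by (rule finite_subset)
qed

lemma MS_insert:
  assumes "finite S" "x \<notin> S"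
  shows "MS (insert x S) s = (\<lambda>(a,M). M(x:=a)) ` (SIGMA a:{..s}. MS S (s-a))"
proof (intro equalityI subsetI)
  fix M assume M: "M \<in> MS (insert x S) s"
  have "sum M (insert x S) = M x + sum M S" using assms by simp
  moreover have "sum (M(x:=0)) S = sum M S" using assms by (intro sum.cong) auto
  ultimately have "M = (\<lambda>(a,M). M(x:=a)) (M x, M(x:=0))" and "(M x, M(x:=0)) \<in> (SIGMA a:{..s}. MS S (s-a))"
    using M assms by (auto simp: MS_def)
  then show "M \<in> (\<lambda>(a,M). M(x:=a)) ` (SIGMA a:{..s}. MS S (s-a))" by blast
next
  fix M assume "M \<in> (\<lambda>(a,M). M(x:=a)) ` (SIGMA a:{..s}. MS S (s-a))"
  then obtain a M' where a: "a \<le> s" and M': "M' \<in> MS S (s-a)" and M: "M = M'(x:=a)" by auto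
  have "sum M S = sum M' S" using assms M by (intro sum.cong) auto
  then have "sum M (insert x S) = a + sum M' S"
    using assms M by simp
  then show "M \<in> MS (insert x S) s" using M' a M by (auto simp: MS_def)
qed

lemma MS_inj:
  assumes "x \<notin> S"
  shows "inj_on (\<lambda>(a,M). M(x:=a)) (SIGMA a:{..s}. MS S (s-a))"
proof (rule inj_onI, clarify)
  fix a M b M'
  assume *: "M(x := a) = M'(x := b)" "M \<in> MS S (s - a)" "M' \<in> MS S (s - b)"
  then have "a = b" by (metis fun_upd_same)
  moreover have "M = M'"
  proof
    fix i show "M i = M' i"
      using * assms by (cases "i = x") (auto simp: MS_def dest: fun_cong[where x=i])
  qed
  ultimately show "a = b \<and> M = M'" by simp
qed

lemma choose_neg: "real ((p + a) choose p) = (-1)^a * ((- (of_nat p + 1)) gchoose a)"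
proof -
  have "((- (of_nat p + 1)) gchoose a) = (-1)^a * ((of_nat a - (- (of_nat p + 1)) - 1) gchoose a :: real)"
    by (rule gbinomial_negated_upper)
  also have "(of_nat a - (- (of_nat p + 1)) - 1 :: real) = of_nat (p + a)" by simp
  also have "(of_nat (p + a) gchoose a :: real) = real ((p+a) choose a)" by (simp add: binomial_gbinomial)
  also have "(p + a) choose a = (p + a) choose p" by (simp add: binomial_symmetric[of a "p+a", simplified])
  finally show ?thesis by simp
qed

lemma G_formula:
  fixes N :: "'i \<Rightarrow> nat"
  assumes "finite S"
  shows "(\<Sum>M\<in>MS S s. \<Prod>i\<in>S. real ((N i + M i) choose N i))
        = (-1)^s * ((- of_nat (sum N S + card S)) gchoose s)"
  using assms
proof (induction S arbitrary: s rule: finite_induct)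
  case empty
  show ?case
  proof (cases s)
    case 0
    have "MS ({}::'i set) s = {\<lambda>_. 0}" using 0 by (auto simp: MS_def)
    then show ?thesis using 0 by simp
  next
    case (Suc t)
    have "MS ({}::'i set) s = {}" using Suc by (auto simp: MS_def)
    then show ?thesis using Suc by simp
  qed
next
  case (insert x S)
  let ?F = "\<lambda>M. \<Prod>i\<in>insert x S. real ((N i + M i) choose N i)"
  let ?G = "\<lambda>s. \<Sum>M\<in>MS S s. \<Prod>i\<in>S. real ((N i + M i) choose N i)"
  have "(\<Sum>M\<in>MS (insert x S) s. ?F M) = (\<Sum>p\<in>(SIGMA a:{..s}. MS S (s-a)). ?F ((\<lambda>(a,M). M(x:=a)) p))"
    unfolding MS_insert[OF insert(1,2)] by (rule sum.reindex[OF MS_inj[OF insert(2)], unfolded comp_def])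
  also have "\<dots> = (\<Sum>a\<le>s. \<Sum>M\<in>MS S (s-a). ?F (M(x:=a)))"
    by (subst sum.Sigma) (auto simp: finite_MS insert(1) case_prod_unfold)
  also have "\<dots> = (\<Sum>a\<le>s. real ((N x + a) choose N x) * ?G (s-a))"
  proof (rule sum.cong[OF refl])
    fix a assume "a \<in> {..s}"
    have "?F (M(x:=a)) = real ((N x + a) choose N x) * (\<Prod>i\<in>S. real ((N i + M i) choose N i))" for M
    proof -
      have "(\<Prod>i\<in>S. real ((N i + (M(x:=a)) i) choose N i)) = (\<Prod>i\<in>S. real ((N i + M i) choose N i))"
        using insert(2) by (intro prod.cong) auto
      then show ?thesis using insert(1,2) by simp
    qed
    then show "(\<Sum>M\<in>MS S (s-a). ?F (M(x:=a))) = real ((N x + a) choose N x) * ?G (s-a)"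
      by (simp add: sum_distrib_left)
  qed
  also have "\<dots> = (\<Sum>a\<le>s. (-1)^s * (((- (of_nat (N x) + 1)) gchoose a) * ((- of_nat (sum N S + card S)) gchoose (s-a))))"
  proof (rule sum.cong[OF refl])
    fix a assume a: "a \<in> {..s}"
    have P: "(-1::real)^a * (-1)^(s-a) = (-1)^s" using a by (simp add: power_add[symmetric])
    have IH: "?G (s-a) = (-1)^(s-a) * ((- of_nat (sum N S + card S)) gchoose (s-a))" by (rule insert(3))
    have C: "real ((N x + a) choose N x) = (-1)^a * ((- (of_nat (N x) + 1)) gchoose a)" by (rule choose_neg)
    show "real ((N x + a) choose N x) * ?G (s-a) = (-1)^s * (((- (of_nat (N x) + 1)) gchoose a) * ((- of_nat (sum N S + card S)) gchoose (s-a)))"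
      unfolding IH C P[symmetric] by (simp only: mult_ac)
  qed
  also have "\<dots> = (-1)^s * ((- (of_nat (N x) + 1) + (- of_nat (sum N S + card S))) gchoose s)"
    by (simp add: sum_distrib_left[symmetric] gbinomial_Vandermonde[symmetric] atLeast0AtMost)
  also have "(- (of_nat (N x) + 1) + (- of_nat (sum N S + card S)) :: real) = - of_nat (sum N (insert x S) + card (insert x S))"
    using insert(1,2) by simp
  finally show ?case .
qed

lemma mdeg_add: "mdeg (\<lambda>i. A i + B i) = mdeg A + mdeg B"
  by (simp add: mdeg_def sum.distrib)

lemma mdeg_le: "(\<forall>i. N i \<le> L i) \<Longrightarrow> mdeg N \<le> mdeg L"
  unfolding mdeg_def by (intro sum_mono) auto

lemma Lsum:
  fixes N :: "'i::finite \<Rightarrow> nat"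
  shows "(\<Sum>L\<in>{L. mdeg L = k \<and> (\<forall>i. N i \<le> L i)}. \<Prod>i\<in>UNIV. real (L i choose N i))
     = (if mdeg N \<le> k then real ((k + card (UNIV::'i set) - 1) choose (k - mdeg N)) else 0)"
proof (cases "mdeg N \<le> k")
  case False
  have E: "{L. mdeg L = k \<and> (\<forall>i. N i \<le> L i)} = {}"
  proof (intro equalityI subsetI)
    fix L assume "L \<in> {L. mdeg L = k \<and> (\<forall>i. N i \<le> L i)}"
    then have "mdeg N \<le> k" using mdeg_le by blast
    then show "L \<in> {}" using False by simp
  qed simp
  show ?thesis unfolding E using False by simp
next
  case True
  define s where "s = k - mdeg N"
  have "(\<Sum>L\<in>{L. mdeg L = k \<and> (\<forall>i. N i \<le> L i)}. \<Prod>i\<in>UNIV. real (L i choose N i))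
      = (\<Sum>M\<in>MS UNIV s. \<Prod>i\<in>UNIV. real ((N i + M i) choose N i))"
  proof -
    have A: "(\<lambda>i. N i + M i) \<in> {L. mdeg L = k \<and> (\<forall>i. N i \<le> L i)}" if "M \<in> MS UNIV s" for M
    proof -
      have "mdeg M = s" using that by (simp add: MS_def mdeg_def)
      then show ?thesis using True by (simp add: mdeg_add s_def)
    qed
    have A2: "mdeg (\<lambda>i. N i + M i) = k" if "M \<in> MS UNIV s" for M using A[OF that] by simp
    have B: "(\<lambda>i. L i - N i) \<in> MS UNIV s" and B2: "(\<lambda>i. N i + (L i - N i)) = L"
      if L: "L \<in> {L. mdeg L = k \<and> (\<forall>i. N i \<le> L i)}" for L
    proof -
      show LL: "(\<lambda>i. N i + (L i - N i)) = L" using L by (intro ext) simp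
      then have "mdeg L = mdeg N + mdeg (\<lambda>i. L i - N i)" by (metis mdeg_add)
      then have "mdeg (\<lambda>i. L i - N i) = s" using L unfolding s_def by auto
      then show "(\<lambda>i. L i - N i) \<in> MS UNIV s" by (simp add: MS_def mdeg_def)
    qed
    show ?thesis
      by (rule sum.reindex_bij_witness[where i="\<lambda>M i. N i + M i" and j="\<lambda>L i. L i - N i"])
         (use A A2 B B2 in \<open>auto simp del: mdeg_def\<close>)
  qed
  also have "\<dots> = (-1)^s * ((- of_nat (mdeg N + card (UNIV::'i set))) gchoose s)"
    using G_formula[of "UNIV::'i set" N s] by (simp add: mdeg_def)
  also have "\<dots> = real ((k + card (UNIV::'i set) - 1) choose s)"
  proof -
    have "((- of_nat (mdeg N + card (UNIV::'i set))) gchoose s) = (-1)^s * ((of_nat (mdeg N + card (UNIV::'i set)) + of_nat s - 1) gchoose s :: real)"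
      by (rule gbinomial_minus)
    also have "(of_nat (mdeg N + card (UNIV::'i set)) + of_nat s - 1 :: real) = of_nat (k + card (UNIV::'i set) - 1)"
    proof -
      have "card (UNIV::'i set) \<ge> 1" using finite_UNIV_card_ge_0[where 'a='i] by simp
      then show ?thesis using True by (simp add: s_def of_nat_diff)
    qed
    finally show ?thesis by (simp add: binomial_gbinomial)
  qed
  finally show ?thesis using True s_def by simp
qed

definition uv :: "'i \<Rightarrow> 'i \<Rightarrow> nat" where "uv l = (\<lambda>i. if i = l then 1 else 0)"

lemma mdeg_uv[simp]: "mdeg (uv (l::'i::finite)) = 1"
  by (simp add: mdeg_def uv_def)

lemma mdeg_zero[simp]: "mdeg (\<lambda>_::'i::finite. 0) = 0" by (simp add: mdeg_def)
lemma mfact_zero[simp]: "mfact (\<lambda>_::'i::finite. 0) = 1" by (simp add: mfact_def)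
lemma mfact_uv[simp]: "mfact (uv (l::'i::finite)) = 1" unfolding mfact_def uv_def by (rule prod.neutral) simp

lemma uv_nz: "uv l \<noteq> (\<lambda>_. 0)" by (auto simp: uv_def fun_eq_iff)
lemma uv_inj: "inj uv" by (auto simp: inj_def uv_def fun_eq_iff split: if_splits)

lemma mdeg_one_uv:
  fixes K :: "'i::finite \<Rightarrow> nat"
  assumes "mdeg K = 1" shows "\<exists>l. K = uv l"
proof -
  obtain l where l: "K l \<noteq> 0"
    using assms by (metis mdeg_def sum.neutral zero_neq_one)
  have "mdeg K = K l + (\<Sum>i\<in>UNIV - {l}. K i)"
    unfolding mdeg_def by (simp add: sum.remove[of UNIV l])
  then have "K l = 1" "(\<Sum>i\<in>UNIV - {l}. K i) = 0" using assms l by linarith+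
  then have "\<forall>i. i \<noteq> l \<longrightarrow> K i = 0" by (simp add: sum_eq_0_iff)
  then have "K = uv l" using \<open>K l = 1\<close> by (auto simp: uv_def fun_eq_iff)
  then show ?thesis ..
qed

lemma mdeg_zero_iff: "mdeg (K::'i::finite\<Rightarrow>nat) = 0 \<longleftrightarrow> K = (\<lambda>_. 0)"
  by (auto simp: mdeg_def fun_eq_iff)

definition wt :: "real \<Rightarrow> ('i::finite) cpoly \<Rightarrow> 'i cpoly \<Rightarrow> ('i \<Rightarrow> nat) \<Rightarrow> ('i \<Rightarrow> nat) \<Rightarrow> 'i mon \<Rightarrow> 'i mon \<Rightarrow> complex" where
  "wt h p q P Q a b = (\<Sum>M\<in>{M. \<forall>i. M i \<le> snd a i \<and> M i \<le> fst b i}.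
        if (\<lambda>i. fst a i + fst b i - M i) = P \<and> (\<lambda>i. snd a i - M i + snd b i) = Q
        then complex_of_real (h ^ mdeg M) / of_nat (mfact M)
             * (\<Prod>i\<in>UNIV. of_nat (fact (snd a i)) / of_nat (fact (snd a i - M i)))
             * (\<Prod>i\<in>UNIV. of_nat (fact (fst b i)) / of_nat (fact (fst b i - M i)))
             * p a * q b
        else 0)"

lemma wick_superset:
  assumes "finite A" "finite B" "supp p \<subseteq> A" "supp q \<subseteq> B"
  shows "wick h p q (P,Q) = (\<Sum>a\<in>A. \<Sum>b\<in>B. wt h p q P Q a b)"
proof -
  have Z1: "wt h p q P Q a b = 0" if "p a = 0" for a b using that unfolding wt_def by (intro sum.neutral ballI) simp
  have Z2: "wt h p q P Q a b = 0" if "q b = 0" for a b using that unfolding wt_def by (intro sum.neutral ballI) simp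
  have "wick h p q (P,Q) = (\<Sum>a\<in>supp p. \<Sum>b\<in>supp q. wt h p q P Q a b)" by (simp add: wick_def wt_def)
  also have "\<dots> = (\<Sum>a\<in>A. \<Sum>b\<in>supp q. wt h p q P Q a b)"
    by (rule sum.mono_neutral_left) (use assms Z1 in \<open>auto simp: supp_def intro!: sum.neutral\<close>)
  also have "\<dots> = (\<Sum>a\<in>A. \<Sum>b\<in>B. wt h p q P Q a b)"
    by (intro sum.cong refl sum.mono_neutral_left) (use assms Z2 in \<open>auto simp: supp_def\<close>)
  finally show ?thesis .
qed

definition Xp :: "real \<Rightarrow> ('i::finite) cpoly" where
  "Xp \<nu> = (\<lambda>m. Jpoly m - complex_of_real \<nu> * one_poly m)"

lemma supp_Xp: "supp (Xp \<nu> :: ('i::finite) cpoly) \<subseteq> insert ((\<lambda>_. 0), (\<lambda>_. 0)) (range (\<lambda>l. (uv l, uv l)))"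
proof
  fix m :: "'i mon" assume "m \<in> supp (Xp \<nu>)"
  then obtain K L where m: "m = (K, L)" and nz: "Xp \<nu> (K, L) \<noteq> 0" by (cases m) (auto simp: supp_def)
  show "m \<in> insert ((\<lambda>_. 0), (\<lambda>_. 0)) (range (\<lambda>l. (uv l, uv l)))"
  proof (cases "(K, L) = ((\<lambda>_. 0), (\<lambda>_. 0))")
    case False
    then have "K = L \<and> mdeg K = 1" using nz by (auto simp: Xp_def Jpoly_def one_poly_def split: if_splits)
    then show ?thesis using m mdeg_one_uv by blast
  qed (use m in auto)
qed

lemma Xp_zero: "Xp \<nu> ((\<lambda>_::'i::finite. 0), (\<lambda>_. 0)) = - complex_of_real \<nu>"
  by (simp add: Xp_def Jpoly_def one_poly_def)

lemma Xp_uv: "Xp \<nu> (uv (l::'i::finite), uv l) = 1"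
  using uv_nz[of l] by (simp add: Xp_def Jpoly_def one_poly_def)

lemma fact_uv[simp]: "fact (uv l i) = (1::'a::semiring_char_0)" by (simp add: uv_def)

lemma prod_fact_uv:
  fixes B :: "'i::finite \<Rightarrow> nat"
  assumes "1 \<le> B l"
  shows "(\<Prod>i\<in>UNIV. of_nat (fact (B i)) / of_nat (fact (B i - uv l i)) :: complex) = of_nat (B l)"
proof -
  have "(\<Prod>i\<in>UNIV. of_nat (fact (B i)) / of_nat (fact (B i - uv l i)) :: complex)
      = (\<Prod>i\<in>UNIV. if i = l then of_nat (B l) else 1)"
  proof (rule prod.cong[OF refl])
    fix i show "(of_nat (fact (B i)) / of_nat (fact (B i - uv l i)) :: complex) = (if i = l then of_nat (B l) else 1)"
    proof (cases "i = l")
      case True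
      have "fact (B l) = B l * fact (B l - 1)" using assms by (simp add: fact_reduce)
      then show ?thesis using True by (simp add: uv_def)
    qed (simp add: uv_def)
  qed
  then show ?thesis by simp
qed

lemma prod_fact_uv':
  fixes B :: "'i::finite \<Rightarrow> nat"
  assumes "1 \<le> B l"
  shows "(\<Prod>i\<in>UNIV. fact (B i) / fact (B i - uv l i) :: complex) = of_nat (B l)"
  using prod_fact_uv[of B l, OF assms] by simp

lemma Mset_zero: "{M. \<forall>i. M i \<le> (0::nat) \<and> M i \<le> B i} = {\<lambda>_. 0}"
  by (auto simp: fun_eq_iff)

lemma Mset_zero': "{M. \<forall>i. M i = (0::nat) \<and> M i \<le> B i} = {\<lambda>_. 0}"
  by (auto simp: fun_eq_iff)

lemma Mset_uv: "{M. \<forall>i. M i \<le> uv l i \<and> M i \<le> B i} = (if 1 \<le> B l then {\<lambda>_. 0, uv l} else {\<lambda>_. 0})"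
proof -
  have "M = (\<lambda>_. 0) \<or> M = uv l" if "\<forall>i. M i \<le> uv l i" for M
  proof (cases "M l = 0")
    case True then have "M = (\<lambda>_. 0)" using that by (auto simp: fun_eq_iff uv_def split: if_splits)
    then show ?thesis ..
  next
    case False
    have "M l \<le> 1" using that[rule_format, of l] by (simp add: uv_def)
    then have "M = uv l" using that False by (auto simp: fun_eq_iff uv_def split: if_splits)
    then show ?thesis ..
  qed
  note D = this
  have U: "uv l i \<le> B i" if "1 \<le> B l" for i using that by (simp add: uv_def)
  have U2: "\<not> (uv l l \<le> B l)" if "\<not> 1 \<le> B l" using that by (simp add: uv_def)
  show ?thesis
  proof (cases "1 \<le> B l")
    case True
    show ?thesis using True D U by auto
  next
    case False
    show ?thesis using False D U2 by (auto simp del: One_nat_def)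
  qed
qed

lemma shift_eq:
  "(\<lambda>i. uv l i + A i) = P \<longleftrightarrow> 1 \<le> P l \<and> A = (\<lambda>i. P i - uv l i)"
  by (auto simp: fun_eq_iff uv_def split: if_splits)

lemma sum_delta_supp:
  assumes "finite (supp q)"
  shows "(\<Sum>b\<in>supp q. if b = c then g * q b else 0) = g * q c"
  using assms by (simp add: sum.delta supp_def)

lemma wick_Xp:
  fixes q :: "('i::finite) cpoly"
  assumes fq: "finite (supp q)"
  shows "wick h (Xp \<nu>) q (P,Q) = (\<Sum>l\<in>UNIV. if 1 \<le> P l \<and> 1 \<le> Q l then q (\<lambda>i. P i - uv l i, \<lambda>i. Q i - uv l i) else 0)
          + complex_of_real (h * real (mdeg P) - \<nu>) * q (P,Q)"
proof -
  let ?z = "((\<lambda>_::'i. 0::nat), (\<lambda>_::'i. 0::nat))"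
  let ?E = "\<lambda>l::'i. (uv l, uv l)"
  have fin: "finite (insert ?z (range ?E))" by simp
  have zn: "?z \<notin> range ?E" using uv_nz by (metis (mono_tags) Pair_inject rangeE)
  have injE: "inj ?E" using uv_inj by (auto simp: inj_def)
  have "wick h (Xp \<nu>) q (P,Q) = (\<Sum>a\<in>insert ?z (range ?E). \<Sum>b\<in>supp q. wt h (Xp \<nu>) q P Q a b)"
    by (rule wick_superset[OF fin fq supp_Xp]) simp
  also have "\<dots> = (\<Sum>b\<in>supp q. wt h (Xp \<nu>) q P Q ?z b) + (\<Sum>l\<in>UNIV. \<Sum>b\<in>supp q. wt h (Xp \<nu>) q P Q (?E l) b)"
    using zn injE by (simp add: sum.reindex)
  also have "(\<Sum>b\<in>supp q. wt h (Xp \<nu>) q P Q ?z b) = - complex_of_real \<nu> * q (P,Q)"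
  proof -
    have "wt h (Xp \<nu>) q P Q ?z b = (if b = (P,Q) then - complex_of_real \<nu> * q b else 0)" for b
      by (cases b) (simp only: wt_def fst_conv snd_conv Mset_zero sum.insert finite.emptyI empty_iff sum.empty, simp add: Xp_zero)
    then show ?thesis using sum_delta_supp[OF fq] by simp
  qed
  also have "(\<Sum>l\<in>UNIV. \<Sum>b\<in>supp q. wt h (Xp \<nu>) q P Q (?E l) b)
     = (\<Sum>l\<in>UNIV. (if 1 \<le> P l \<and> 1 \<le> Q l then q (\<lambda>i. P i - uv l i, \<lambda>i. Q i - uv l i) else 0)
         + complex_of_real h * of_nat (P l) * q (P,Q))"
  proof (rule sum.cong[OF refl])
    fix l
    let ?c = "(\<lambda>i. P i - uv l i, \<lambda>i. Q i - uv l i)"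
    have W: "wt h (Xp \<nu>) q P Q (?E l) b =
        (if b = ?c then (if 1 \<le> P l \<and> 1 \<le> Q l then 1 else 0) * q b else 0)
        + (if b = (P,Q) then complex_of_real h * of_nat (P l) * q b else 0)" for b
    proof (cases b)
      case (Pair B1 B2)
      have T0: "(if (\<lambda>i. uv l i + B1 i - 0) = P \<and> (\<lambda>i. uv l i - 0 + B2 i) = Q then
            complex_of_real (h ^ mdeg (\<lambda>_::'i. 0::nat)) / of_nat (mfact (\<lambda>_::'i. 0::nat))
             * (\<Prod>i\<in>UNIV. of_nat (fact (uv l i)) / of_nat (fact (uv l i - 0)))
             * (\<Prod>i\<in>UNIV. of_nat (fact (B1 i)) / of_nat (fact (B1 i - 0)))
             * Xp \<nu> (uv l, uv l) * q (B1,B2) else 0)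
          = (if (B1,B2) = ?c then (if 1 \<le> P l \<and> 1 \<le> Q l then 1 else 0) * q (B1,B2) else 0)"
        using shift_eq[of l B1 P] shift_eq[of l B2 Q] by (auto simp: Xp_uv)
      show ?thesis
      proof (cases "1 \<le> B1 l")
        case True
        have T1: "(if (\<lambda>i. uv l i + B1 i - uv l i) = P \<and> (\<lambda>i. uv l i - uv l i + B2 i) = Q then
            complex_of_real (h ^ mdeg (uv l)) / of_nat (mfact (uv l))
             * (\<Prod>i\<in>UNIV. of_nat (fact (uv l i)) / of_nat (fact (uv l i - uv l i)))
             * (\<Prod>i\<in>UNIV. of_nat (fact (B1 i)) / of_nat (fact (B1 i - uv l i)))
             * Xp \<nu> (uv l, uv l) * q (B1,B2) else 0)
          = (if (B1,B2) = (P,Q) then complex_of_real h * of_nat (P l) * q (B1,B2) else 0)"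
          using True by (auto simp: Xp_uv prod_fact_uv prod_fact_uv')
        have ne: "(\<lambda>_::'i. 0::nat) \<noteq> uv l" using uv_nz by metis
        have S2: "(\<Sum>M\<in>{\<lambda>_. 0, uv l}. g M) = g (\<lambda>_. 0) + g (uv l)" for g :: "('i \<Rightarrow> nat) \<Rightarrow> complex"
          using ne by simp
        show ?thesis unfolding wt_def Pair fst_conv snd_conv Mset_uv if_P[OF True] S2 T0 T1 by simp
      next
        case False
        have T1: "(if (B1,B2) = (P,Q) then complex_of_real h * of_nat (P l) * q (B1,B2) else 0) = 0"
          using False by auto
        have S1: "(\<Sum>M\<in>{\<lambda>_. 0}. g M) = g (\<lambda>_. 0)" for g :: "('i \<Rightarrow> nat) \<Rightarrow> complex" by simp
        show ?thesis unfolding wt_def Pair fst_conv snd_conv Mset_uv if_not_P[OF False] S1 T0 T1 by simp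
      qed
    qed
    have "(\<Sum>b\<in>supp q. wt h (Xp \<nu>) q P Q (?E l) b)
        = (if 1 \<le> P l \<and> 1 \<le> Q l then 1 else 0) * q ?c + complex_of_real h * of_nat (P l) * q (P,Q)"
      unfolding W sum.distrib using sum_delta_supp[OF fq, of ?c] sum_delta_supp[OF fq, of "(P,Q)"] by simp
    then show "(\<Sum>b\<in>supp q. wt h (Xp \<nu>) q P Q (?E l) b)
       = (if 1 \<le> P l \<and> 1 \<le> Q l then q ?c else 0) + complex_of_real h * of_nat (P l) * q (P,Q)"
      by simp
  qed
  also have "(\<Sum>l\<in>UNIV. (if 1 \<le> P l \<and> 1 \<le> Q l then q (\<lambda>i. P i - uv l i, \<lambda>i. Q i - uv l i) else 0)
         + complex_of_real h * of_nat (P l) * q (P,Q))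
      = (\<Sum>l\<in>UNIV. if 1 \<le> P l \<and> 1 \<le> Q l then q (\<lambda>i. P i - uv l i, \<lambda>i. Q i - uv l i) else 0)
         + complex_of_real h * of_nat (mdeg P) * q (P,Q)"
    by (simp add: sum.distrib mdeg_def sum_distrib_right sum_distrib_left)
  finally show ?thesis by (simp add: algebra_simps)
qed

definition FS :: "('i::finite) cpoly \<Rightarrow> ('i \<Rightarrow> nat) set" where
  "FS f = {K. f (K, \<lambda>_. 0) \<noteq> 0}"

lemma Pkl_f:
  fixes f :: "('i::finite) cpoly"
  assumes "f \<in> Pkl k 0" "f (K, L) \<noteq> 0"
  shows "L = (\<lambda>_. 0) \<and> mdeg K = k"
proof -
  have "mdeg K = k \<and> mdeg L = 0" using assms by (auto simp: Pkl_def)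
  then show ?thesis using mdeg_zero_iff[of L] by simp
qed

lemma FS_mdeg: "(f::('i::finite) cpoly) \<in> Pkl k 0 \<Longrightarrow> K \<in> FS f \<Longrightarrow> mdeg K = k"
  using Pkl_f by (auto simp: FS_def)

lemma supp_f:
  fixes f :: "('i::finite) cpoly"
  assumes "f \<in> Pkl k 0" shows "supp f = (\<lambda>K. (K, \<lambda>_. 0)) ` FS f"
proof (intro equalityI subsetI)
  fix m assume "m \<in> supp f"
  then obtain K L where m: "m = (K,L)" "f (K,L) \<noteq> 0" by (cases m) (auto simp: supp_def)
  then have "L = (\<lambda>_. 0)" using Pkl_f[OF assms] by blast
  then show "m \<in> (\<lambda>K. (K, \<lambda>_. 0)) ` FS f" using m by (auto simp: FS_def)
qed (auto simp: supp_def FS_def)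

lemma finite_FS: fixes f :: "('i::finite) cpoly" assumes "f \<in> Pkl k 0" shows "finite (FS f)"
proof -
  have "finite (supp f)" using assms by (simp add: Pkl_def)
  then have "finite (fst ` supp f)" by simp
  moreover have "fst ` supp f = FS f" using supp_f[OF assms] by (simp add: image_image)
  ultimately show ?thesis by simp
qed

lemma supp_cstar_f:
  fixes f :: "('i::finite) cpoly"
  assumes "f \<in> Pkl k 0" shows "supp (cstar f) = (\<lambda>K. (\<lambda>_. 0, K)) ` FS f"
proof (intro equalityI subsetI)
  fix m assume "m \<in> supp (cstar f)"
  then obtain K L where m: "m = (L,K)" "f (K,L) \<noteq> 0" by (cases m) (auto simp: supp_def cstar_def)
  then have "L = (\<lambda>_. 0)" using Pkl_f[OF assms] by blast
  then show "m \<in> (\<lambda>K. (\<lambda>_. 0, K)) ` FS f" using m by (auto simp: FS_def)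
qed (auto simp: supp_def FS_def cstar_def)

lemma cstar_app: "cstar p (K,L) = cnj (p (L,K))" by (simp add: cstar_def)

lemma "cstar (f::('i::finite) cpoly) (\<lambda>_. 0, xa) = cnj (f (xa, \<lambda>_. 0))" by (simp add: cstar_app)
lemma "cstar (f::('i::finite) cpoly) (\<lambda>_. 0, xa) = cnj (f (xa, \<lambda>_. 0))" by (rule cstar_app)

definition Sw :: "('i::finite) cpoly \<Rightarrow> (('i \<Rightarrow> nat) \<Rightarrow> complex) \<Rightarrow> 'i cpoly" where
  "Sw f w = (\<lambda>(P,Q). \<Sum>K1\<in>FS f. \<Sum>K2\<in>FS f.
     if (\<forall>i. K1 i \<le> P i) \<and> (\<forall>i. K2 i \<le> Q i) \<and> (\<lambda>i. P i - K1 i) = (\<lambda>i. Q i - K2 i)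
     then f (K1, \<lambda>_. 0) * cnj (f (K2, \<lambda>_. 0)) * w (\<lambda>i. P i - K1 i) else 0)"

lemma Sw_app: "Sw f w (P,Q) = (\<Sum>K1\<in>FS f. \<Sum>K2\<in>FS f.
     if (\<forall>i. K1 i \<le> P i) \<and> (\<forall>i. K2 i \<le> Q i) \<and> (\<lambda>i. P i - K1 i) = (\<lambda>i. Q i - K2 i)
     then f (K1, \<lambda>_. 0) * cnj (f (K2, \<lambda>_. 0)) * w (\<lambda>i. P i - K1 i) else 0)"
  by (simp add: Sw_def)

lemma sub_zero_iff: "((\<forall>i. K i \<le> P i) \<and> (\<lambda>i. P i - K i) = (\<lambda>_. (0::nat))) \<longleftrightarrow> K = P"
  by (auto simp: fun_eq_iff intro: le_antisym)

definition delta0 :: "('i \<Rightarrow> nat) \<Rightarrow> complex" where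
  "delta0 N = (if N = (\<lambda>_. 0) then 1 else 0)"

lemma pmult_Sw:
  fixes f :: "('i::finite) cpoly"
  assumes f: "f \<in> Pkl k 0"
  shows "pmult f (cstar f) = Sw f delta0"
proof (rule ext, clarify)
  fix P Q :: "'i \<Rightarrow> nat"
  have inj1: "inj_on (\<lambda>K. (K, \<lambda>_::'i. 0::nat)) A" for A by (auto simp: inj_on_def)
  have inj2: "inj_on (\<lambda>K. (\<lambda>_::'i. 0::nat, K)) A" for A by (auto simp: inj_on_def)
  have "pmult f (cstar f) (P,Q) = (\<Sum>K1\<in>FS f. \<Sum>K2\<in>FS f.
      if K1 = P \<and> K2 = Q then f (K1, \<lambda>_. 0) * cnj (f (K2, \<lambda>_. 0)) else 0)"
    unfolding pmult_def supp_f[OF f] supp_cstar_f[OF f]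
    apply (simp add: sum.reindex[OF inj1] sum.reindex[OF inj2])
    apply (intro sum.cong refl)
    apply (simp add: cstar_app)
    done
  also have "\<dots> = Sw f delta0 (P,Q)"
    unfolding Sw_app
  proof (intro sum.cong refl)
    fix K1 K2
    show "(if K1 = P \<and> K2 = Q then f (K1, \<lambda>_. 0) * cnj (f (K2, \<lambda>_. 0)) else 0) =
      (if (\<forall>i. K1 i \<le> P i) \<and> (\<forall>i. K2 i \<le> Q i) \<and> (\<lambda>i. P i - K1 i) = (\<lambda>i. Q i - K2 i)
       then f (K1, \<lambda>_. 0) * cnj (f (K2, \<lambda>_. 0)) * delta0 (\<lambda>i. P i - K1 i) else 0)"
    proof (cases "(\<forall>i. K1 i \<le> P i) \<and> (\<forall>i. K2 i \<le> Q i) \<and> (\<lambda>i. P i - K1 i) = (\<lambda>i. Q i - K2 i)")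
      case True
      then have "(\<lambda>i. P i - K1 i) = (\<lambda>_. 0) \<longleftrightarrow> K1 = P \<and> K2 = Q"
        using sub_zero_iff[of K1 P] sub_zero_iff[of K2 Q] by auto
      then show ?thesis using True by (simp add: delta0_def)
    next
      case False
      have "\<not> (K1 = P \<and> K2 = Q)"
      proof
        assume "K1 = P \<and> K2 = Q"
        then show False using False by simp
      qed
      then show ?thesis by (simp only: if_not_P[OF False] if_not_P[OF \<open>\<not> (K1 = P \<and> K2 = Q)\<close>] if_False)
    qed
  qed
  finally show "pmult f (cstar f) (P,Q) = Sw f delta0 (P,Q)" .
qed

lemma Sw_cstar: "cstar (Sw (f::('i::finite) cpoly) w) = Sw f (\<lambda>N. cnj (w N))"
proof (rule ext, clarify)
  fix P Q :: "'i \<Rightarrow> nat"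
  let ?c = "\<lambda>P Q K1 K2. (\<forall>i. K1 i \<le> P i) \<and> (\<forall>i. K2 i \<le> Q i) \<and> (\<lambda>i. P i - K1 i) = (\<lambda>i. Q i - K2 i)"
  have "cstar (Sw f w) (P,Q) = (\<Sum>K1\<in>FS f. \<Sum>K2\<in>FS f.
     if ?c Q P K1 K2 then cnj (f (K1, \<lambda>_. 0)) * f (K2, \<lambda>_. 0) * cnj (w (\<lambda>i. Q i - K1 i)) else 0)"
    unfolding cstar_app Sw_app cnj_sum by (intro sum.cong refl) simp
  also have "\<dots> = (\<Sum>K2\<in>FS f. \<Sum>K1\<in>FS f.
     if ?c Q P K1 K2 then cnj (f (K1, \<lambda>_. 0)) * f (K2, \<lambda>_. 0) * cnj (w (\<lambda>i. Q i - K1 i)) else 0)"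
    by (rule sum.swap)
  also have "\<dots> = Sw f (\<lambda>N. cnj (w N)) (P,Q)"
    unfolding Sw_app
  proof (intro sum.cong refl)
    fix K1 K2
    show "(if ?c Q P K2 K1 then cnj (f (K2, \<lambda>_. 0)) * f (K1, \<lambda>_. 0) * cnj (w (\<lambda>i. Q i - K2 i)) else 0)
      = (if ?c P Q K1 K2 then f (K1, \<lambda>_. 0) * cnj (f (K2, \<lambda>_. 0)) * cnj (w (\<lambda>i. P i - K1 i)) else 0)"
    proof (cases "?c P Q K1 K2")
      case True
      then have "?c Q P K2 K1" by metis
      then show ?thesis using True by (simp add: mult_ac)
    next
      case False
      then have "\<not> ?c Q P K2 K1" by metis
      then show ?thesis using False by (simp only: if_False if_not_P)
    qed
  qed
  finally show "cstar (Sw f w) (P,Q) = Sw f (\<lambda>N. cnj (w N)) (P,Q)" .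
qed

lemma if_sum: "(if c then a * x * (\<Sum>L\<in>I. g L) else 0) = (\<Sum>L\<in>I. if c then a * x * g L else (0::complex))"
  by (cases c) (simp_all add: sum_distrib_left mult_ac)

lemma Sw_sum:
  assumes "finite I"
  shows "Sw f (\<lambda>N. \<Sum>L\<in>I. w L N) m = (\<Sum>L\<in>I. Sw f (w L) m)"
proof (cases m)
  case (Pair P Q)
  have "Sw f (\<lambda>N. \<Sum>L\<in>I. w L N) (P,Q) = (\<Sum>K1\<in>FS f. \<Sum>K2\<in>FS f. \<Sum>L\<in>I.
     if (\<forall>i. K1 i \<le> P i) \<and> (\<forall>i. K2 i \<le> Q i) \<and> (\<lambda>i. P i - K1 i) = (\<lambda>i. Q i - K2 i)
     then f (K1, \<lambda>_. 0) * cnj (f (K2, \<lambda>_. 0)) * w L (\<lambda>i. P i - K1 i) else 0)"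
    unfolding Sw_app by (intro sum.cong refl if_sum)
  also have "\<dots> = (\<Sum>K1\<in>FS f. \<Sum>L\<in>I. \<Sum>K2\<in>FS f.
     if (\<forall>i. K1 i \<le> P i) \<and> (\<forall>i. K2 i \<le> Q i) \<and> (\<lambda>i. P i - K1 i) = (\<lambda>i. Q i - K2 i)
     then f (K1, \<lambda>_. 0) * cnj (f (K2, \<lambda>_. 0)) * w L (\<lambda>i. P i - K1 i) else 0)"
    by (intro sum.cong refl sum.swap)
  also have "\<dots> = (\<Sum>L\<in>I. Sw f (w L) (P,Q))"
    unfolding Sw_app by (rule sum.swap)
  finally show ?thesis using Pair by simp
qed

lemma Sw_add: "Sw f (\<lambda>N. w1 N + w2 N) m = Sw f w1 m + Sw f w2 m"
proof (cases m)
  case (Pair P Q)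
  have H: "(if c then a * (x + y) else 0) = (if c then a * x else 0) + (if c then a * y else (0::complex))" for c a x y
    by (simp add: distrib_left)
  show ?thesis unfolding Pair Sw_app sum.distrib[symmetric] H ..
qed

lemma finite_mdeg_le: "finite {N::'i::finite \<Rightarrow> nat. mdeg N \<le> d}"
proof -
  have "{N::'i \<Rightarrow> nat. mdeg N \<le> d} \<subseteq> {N. \<forall>x. (x \<in> UNIV \<longrightarrow> N x \<in> {..d}) \<and> (x \<notin> UNIV \<longrightarrow> N x = 0)}"
  proof (clarsimp)
    fix N :: "'i \<Rightarrow> nat" and x assume "mdeg N \<le> d"
    moreover have "N x \<le> mdeg N" unfolding mdeg_def by (rule member_le_sum) auto
    ultimately show "N x \<le> d" by simp
  qed
  moreover have "finite {N::'i \<Rightarrow> nat. \<forall>x. (x \<in> UNIV \<longrightarrow> N x \<in> {..d}) \<and> (x \<notin> UNIV \<longrightarrow> N x = 0)}"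
    by (rule finite_set_of_finite_funs) auto
  ultimately show ?thesis by (rule finite_subset)
qed

lemma Sw_nz:
  assumes "Sw f w (P,Q) \<noteq> 0"
  shows "\<exists>K1\<in>FS f. \<exists>K2\<in>FS f. \<exists>N. P = (\<lambda>i. K1 i + N i) \<and> Q = (\<lambda>i. K2 i + N i) \<and> w N \<noteq> 0"
proof -
  obtain K1 where K1: "K1 \<in> FS f" and s1: "(\<Sum>K2\<in>FS f.
     if (\<forall>i. K1 i \<le> P i) \<and> (\<forall>i. K2 i \<le> Q i) \<and> (\<lambda>i. P i - K1 i) = (\<lambda>i. Q i - K2 i)
     then f (K1, \<lambda>_. 0) * cnj (f (K2, \<lambda>_. 0)) * w (\<lambda>i. P i - K1 i) else 0) \<noteq> 0"
    using assms unfolding Sw_app by (rule sum.not_neutral_contains_not_neutral)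
  obtain K2 where K2: "K2 \<in> FS f" and nz: "(if (\<forall>i. K1 i \<le> P i) \<and> (\<forall>i. K2 i \<le> Q i) \<and> (\<lambda>i. P i - K1 i) = (\<lambda>i. Q i - K2 i)
     then f (K1, \<lambda>_. 0) * cnj (f (K2, \<lambda>_. 0)) * w (\<lambda>i. P i - K1 i) else 0) \<noteq> 0"
    using s1 by (rule sum.not_neutral_contains_not_neutral)
  have c: "(\<forall>i. K1 i \<le> P i) \<and> (\<forall>i. K2 i \<le> Q i) \<and> (\<lambda>i. P i - K1 i) = (\<lambda>i. Q i - K2 i)"
  proof (rule ccontr)
    assume a: "\<not> ((\<forall>i. K1 i \<le> P i) \<and> (\<forall>i. K2 i \<le> Q i) \<and> (\<lambda>i. P i - K1 i) = (\<lambda>i. Q i - K2 i))"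
    show False using nz unfolding if_not_P[OF a] by simp
  qed
  have w: "w (\<lambda>i. P i - K1 i) \<noteq> 0" using nz unfolding if_P[OF c] by simp
  have eqP: "P = (\<lambda>i. K1 i + (P i - K1 i))" using c by (intro ext) simp
  have eqQ: "Q = (\<lambda>i. K2 i + (P i - K1 i))"
  proof
    fix i have "P i - K1 i = Q i - K2 i" using c by (metis (mono_tags))
    then show "Q i = K2 i + (P i - K1 i)" using c by simp
  qed
  show ?thesis
    apply (rule bexI[OF _ K1], rule bexI[OF _ K2], rule exI[of _ "\<lambda>i. P i - K1 i"])
    by (intro conjI eqP eqQ w)
qed


lemma Sw_supp:
  assumes "\<And>N. w N \<noteq> 0 \<Longrightarrow> mdeg N \<le> d"
  shows "supp (Sw f w) \<subseteq> (\<lambda>(K1,K2,N). ((\<lambda>i. K1 i + N i), (\<lambda>i. K2 i + N i))) ` (FS f \<times> FS f \<times> {N. mdeg N \<le> d})"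
proof
  fix m assume "m \<in> supp (Sw f w)"
  then obtain P Q where m: "m = (P,Q)" "Sw f w (P,Q) \<noteq> 0" by (cases m) (auto simp: supp_def)
  then obtain K1 K2 N where KK: "K1 \<in> FS f" "K2 \<in> FS f" "P = (\<lambda>i. K1 i + N i)" "Q = (\<lambda>i. K2 i + N i)" "w N \<noteq> 0"
    using Sw_nz by blast
  have mem: "(K1,K2,N) \<in> FS f \<times> FS f \<times> {N. mdeg N \<le> d}" using KK assms by simp
  show "m \<in> (\<lambda>(K1,K2,N). ((\<lambda>i. K1 i + N i), (\<lambda>i. K2 i + N i))) ` (FS f \<times> FS f \<times> {N. mdeg N \<le> d})"
    by (rule rev_image_eqI[OF mem]) (simp add: m KK)
qed

lemma finite_supp_Sw:
  fixes f :: "('i::finite) cpoly"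
  assumes f: "f \<in> Pkl k 0" and "\<And>N. w N \<noteq> 0 \<Longrightarrow> mdeg N \<le> d"
  shows "finite (supp (Sw f w))"
proof -
  have "supp (Sw f w) \<subseteq> (\<lambda>(K1,K2,N). ((\<lambda>i. K1 i + N i), (\<lambda>i. K2 i + N i))) ` (FS f \<times> FS f \<times> {N. mdeg N \<le> d})"
    by (rule Sw_supp) (rule assms(2))
  then show ?thesis
    by (rule finite_subset) (intro finite_imageI finite_cartesian_product finite_FS[OF f] finite_mdeg_le)
qed

lemma Sw_Bset:
  fixes f :: "('i::finite) cpoly"
  assumes f: "f \<in> Pkl k 0" and d: "\<And>N. w N \<noteq> 0 \<Longrightarrow> mdeg N \<le> d"
  shows "Sw f w \<in> Bset"
  unfolding Bset_def
proof (intro CollectI conjI allI impI)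
  show "finite (supp (Sw f w))" by (rule finite_supp_Sw[OF f d])
  fix P Q assume "Sw f w (P,Q) \<noteq> 0"
  then obtain K1 K2 N where "K1 \<in> FS f" "K2 \<in> FS f" "P = (\<lambda>i. K1 i + N i)" "Q = (\<lambda>i. K2 i + N i)"
    using Sw_nz by blast
  then show "mdeg P = mdeg Q" using FS_mdeg[OF f] by (simp add: mdeg_add)
qed

definition Rop :: "real \<Rightarrow> (('i::finite \<Rightarrow> nat) \<Rightarrow> complex) \<Rightarrow> ('i \<Rightarrow> nat) \<Rightarrow> complex" where
  "Rop h w N = (\<Sum>l\<in>UNIV. if 1 \<le> N l then w (\<lambda>i. N i - uv l i) else 0)
      + complex_of_real (h * (real (mdeg N) + 1)) * w N"

lemma cond_shift:
  assumes "1 \<le> P l" "1 \<le> Q l"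
  shows "((\<forall>i. K1 i \<le> P i - uv l i) \<and> (\<forall>i. K2 i \<le> Q i - uv l i) \<and> (\<lambda>i. P i - uv l i - K1 i) = (\<lambda>i. Q i - uv l i - K2 i))
     \<longleftrightarrow> (((\<forall>i. K1 i \<le> P i) \<and> (\<forall>i. K2 i \<le> Q i) \<and> (\<lambda>i. P i - K1 i) = (\<lambda>i. Q i - K2 i)) \<and> 1 \<le> P l - K1 l)"
proof -
  let ?A = "\<lambda>i. K1 i \<le> P i - uv l i \<and> K2 i \<le> Q i - uv l i \<and> P i - uv l i - K1 i = Q i - uv l i - K2 i"
  let ?B = "\<lambda>i. K1 i \<le> P i \<and> K2 i \<le> Q i \<and> P i - K1 i = Q i - K2 i"
  have L: "((\<forall>i. K1 i \<le> P i - uv l i) \<and> (\<forall>i. K2 i \<le> Q i - uv l i) \<and> (\<lambda>i. P i - uv l i - K1 i) = (\<lambda>i. Q i - uv l i - K2 i)) \<longleftrightarrow> (\<forall>i. ?A i)"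
    by (auto simp: fun_eq_iff)
  have R: "((\<forall>i. K1 i \<le> P i) \<and> (\<forall>i. K2 i \<le> Q i) \<and> (\<lambda>i. P i - K1 i) = (\<lambda>i. Q i - K2 i)) \<longleftrightarrow> (\<forall>i. ?B i)"
    by (auto simp: fun_eq_iff)
  have Ai: "?A i \<longleftrightarrow> ?B i" if "i \<noteq> l" for i using that by (simp add: uv_def)
  have Al: "?A l \<longleftrightarrow> ?B l \<and> 1 \<le> P l - K1 l" using assms by (simp add: uv_def) arith
  show ?thesis unfolding L R using Ai Al by metis
qed

lemma cond_noshift:
  fixes P Q K1 K2 :: "'i \<Rightarrow> nat"
  assumes "(\<forall>i. K1 i \<le> P i) \<and> (\<forall>i. K2 i \<le> Q i) \<and> (\<lambda>i. P i - K1 i) = (\<lambda>i. Q i - K2 i)" "1 \<le> P l - K1 l"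
  shows "1 \<le> P l \<and> 1 \<le> Q l"
proof -
  have "P l - K1 l = Q l - K2 l" using assms(1) by metis
  then have "1 \<le> Q l - K2 l" using assms(2) by simp
  show ?thesis using order_trans[OF assms(2) diff_le_self] order_trans[OF \<open>1 \<le> Q l - K2 l\<close> diff_le_self] by simp
qed

lemma Sw_X:
  fixes f :: "('i::finite) cpoly"
  assumes f: "f \<in> Pkl k 0" and d: "\<And>N. w N \<noteq> 0 \<Longrightarrow> mdeg N \<le> d"
  shows "wick h (Xp (h * (real k - 1))) (Sw f w) = Sw f (Rop h w)"
proof (rule ext, clarify)
  fix P Q :: "'i \<Rightarrow> nat"
  let ?c = "\<lambda>K1 K2. (\<forall>i. K1 i \<le> P i) \<and> (\<forall>i. K2 i \<le> Q i) \<and> (\<lambda>i. P i - K1 i) = (\<lambda>i. Q i - K2 i)"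
  let ?a = "\<lambda>K1 K2. f (K1, \<lambda>_. 0) * cnj (f (K2, \<lambda>_. 0))"
  let ?t1 = "\<lambda>K1 K2 l. if ?c K1 K2 \<and> 1 \<le> P l - K1 l then ?a K1 K2 * w (\<lambda>i. P i - K1 i - uv l i) else 0"
  let ?t2 = "\<lambda>K1 K2. if ?c K1 K2 then complex_of_real (h * (real (mdeg (\<lambda>i. P i - K1 i)) + 1)) * (?a K1 K2 * w (\<lambda>i. P i - K1 i)) else 0"
  have fin: "finite (supp (Sw f w))" by (rule finite_supp_Sw[OF f d])
  have E1: "(if 1 \<le> P l \<and> 1 \<le> Q l then Sw f w (\<lambda>i. P i - uv l i, \<lambda>i. Q i - uv l i) else 0)
      = (\<Sum>K1\<in>FS f. \<Sum>K2\<in>FS f. ?t1 K1 K2 l)" for l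
  proof (cases "1 \<le> P l \<and> 1 \<le> Q l")
    case True
    have ds: "(\<lambda>i. P i - uv l i - K1 i) = (\<lambda>i. P i - K1 i - uv l i)" for K1 :: "'i \<Rightarrow> nat"
      by (simp add: add.commute)
    show ?thesis unfolding if_P[OF True] Sw_app cond_shift[of P l Q, OF conjunct1[OF True] conjunct2[OF True]] unfolding ds ..
  next
    case False
    have Z: "?t1 K1 K2 l = 0" for K1 K2
    proof (cases "?c K1 K2 \<and> 1 \<le> P l - K1 l")
      case True
      then have "1 \<le> P l \<and> 1 \<le> Q l" using cond_noshift[of K1 P K2 Q l] by blast
      then show ?thesis using False by blast
    qed (simp only: if_False if_not_P)
    show ?thesis unfolding if_not_P[OF False] Z by simp
  qed
  have E2: "complex_of_real (h * real (mdeg P) - h * (real k - 1)) * Sw f w (P,Q) = (\<Sum>K1\<in>FS f. \<Sum>K2\<in>FS f. ?t2 K1 K2)"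
    unfolding Sw_app sum_distrib_left
  proof (intro sum.cong refl)
    fix K1 K2 assume K1: "K1 \<in> FS f"
    show "complex_of_real (h * real (mdeg P) - h * (real k - 1)) *
         (if ?c K1 K2 then ?a K1 K2 * w (\<lambda>i. P i - K1 i) else 0) = ?t2 K1 K2"
    proof (cases "?c K1 K2")
      case True
      then have "P = (\<lambda>i. K1 i + (P i - K1 i))" by (intro ext) simp
      then have "mdeg P = mdeg K1 + mdeg (\<lambda>i. P i - K1 i)" by (metis mdeg_add)
      then have "mdeg P = k + mdeg (\<lambda>i. P i - K1 i)" using FS_mdeg[OF f K1] by simp
      then have "h * real (mdeg P) - h * (real k - 1) = h * (real (mdeg (\<lambda>i. P i - K1 i)) + 1)"
        by (simp add: algebra_simps)
      then show ?thesis using True by simp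
    next
      case False
      show ?thesis unfolding if_not_P[OF False] by simp
    qed
  qed
  have E3: "Sw f (Rop h w) (P,Q) = (\<Sum>K1\<in>FS f. \<Sum>K2\<in>FS f. (\<Sum>l\<in>UNIV. ?t1 K1 K2 l) + ?t2 K1 K2)"
    unfolding Sw_app
  proof (intro sum.cong refl)
    fix K1 K2
    show "(if ?c K1 K2 then ?a K1 K2 * Rop h w (\<lambda>i. P i - K1 i) else 0) = (\<Sum>l\<in>UNIV. ?t1 K1 K2 l) + ?t2 K1 K2"
    proof (cases "?c K1 K2")
      case True
      show ?thesis unfolding eqTrueI[OF True] if_True simp_thms(21) Rop_def
        by (simp add: distrib_left sum_distrib_left if_distrib mult_ac cong: if_cong)
    next
      case False
      show ?thesis unfolding Eq_FalseI[OF False] if_False simp_thms(23) by simp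
    qed
  qed
  have "wick h (Xp (h * (real k - 1))) (Sw f w) (P,Q)
      = (\<Sum>l\<in>UNIV. \<Sum>K1\<in>FS f. \<Sum>K2\<in>FS f. ?t1 K1 K2 l) + (\<Sum>K1\<in>FS f. \<Sum>K2\<in>FS f. ?t2 K1 K2)"
    unfolding wick_Xp[OF fin] E1 E2 ..
  also have "(\<Sum>l\<in>UNIV. \<Sum>K1\<in>FS f. \<Sum>K2\<in>FS f. ?t1 K1 K2 l) = (\<Sum>K1\<in>FS f. \<Sum>K2\<in>FS f. \<Sum>l\<in>UNIV. ?t1 K1 K2 l)"
    by (subst sum.swap) (intro sum.cong refl sum.swap)
  finally show "wick h (Xp (h * (real k - 1))) (Sw f w) (P,Q) = Sw f (Rop h w) (P,Q)"
    unfolding E3 by (simp add: sum.distrib)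
qed

definition gL :: "('i::finite) cpoly \<Rightarrow> real \<Rightarrow> ('i \<Rightarrow> nat) \<Rightarrow> 'i cpoly" where
  "gL f r L = (\<lambda>(A,B). if A = L then complex_of_real r * cnj (f (B, \<lambda>_. 0)) else 0)"

lemma gL_app: "gL f r L (A,B) = (if A = L then complex_of_real r * cnj (f (B, \<lambda>_. 0)) else 0)"
  by (simp add: gL_def)

lemma supp_gL: "supp (gL f r L) \<subseteq> (\<lambda>K. (L,K)) ` FS f"
  by (auto simp: supp_def gL_def FS_def split: if_splits)

lemma supp_cstar_gL: "supp (cstar (gL f r L)) \<subseteq> (\<lambda>K. (K,L)) ` FS f"
  by (auto simp: supp_def gL_def FS_def cstar_def split: if_splits)

lemma gL_Bset:
  fixes f :: "('i::finite) cpoly"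
  assumes f: "f \<in> Pkl k 0" and L: "mdeg L = k"
  shows "gL f r L \<in> Bset"
  unfolding Bset_def
proof (intro CollectI conjI allI impI)
  show "finite (supp (gL f r L))"
    by (rule finite_subset[OF supp_gL]) (simp add: finite_FS[OF f])
  fix A B assume "gL f r L (A,B) \<noteq> 0"
  then have "A = L" "B \<in> FS f" by (auto simp: gL_app FS_def split: if_splits)
  then show "mdeg A = mdeg B" using FS_mdeg[OF f] L by simp
qed

lemma cond_M:
  fixes M L K1 K2 P Q :: "'i \<Rightarrow> nat"
  assumes hML: "\<forall>i. M i \<le> L i"
  shows "((\<lambda>i. K1 i + L i - M i) = P \<and> (\<lambda>i. L i - M i + K2 i) = Q) \<longleftrightarrow>
     (M = (\<lambda>i. L i - (P i - K1 i)) \<and> (((\<forall>i. K1 i \<le> P i) \<and> (\<forall>i. K2 i \<le> Q i) \<and> (\<lambda>i. P i - K1 i) = (\<lambda>i. Q i - K2 i)) \<and> (\<forall>i. P i - K1 i \<le> L i)))"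
proof -
  have pi: "(K1 i + L i - M i = P i \<and> L i - M i + K2 i = Q i) \<longleftrightarrow>
     (M i = L i - (P i - K1 i) \<and> K1 i \<le> P i \<and> K2 i \<le> Q i \<and> P i - K1 i = Q i - K2 i \<and> P i - K1 i \<le> L i)" for i
    using hML[rule_format, of i] by arith
  show ?thesis unfolding fun_eq_iff using pi by blast
qed

lemma wt_single:
  fixes L K1 K2 P Q :: "'i::finite \<Rightarrow> nat"
  shows "(\<Sum>M\<in>{M. \<forall>i. M i \<le> L i \<and> M i \<le> L i}. if (\<lambda>i. K1 i + L i - M i) = P \<and> (\<lambda>i. L i - M i + K2 i) = Q then G M else 0)
   = (if ((\<forall>i. K1 i \<le> P i) \<and> (\<forall>i. K2 i \<le> Q i) \<and> (\<lambda>i. P i - K1 i) = (\<lambda>i. Q i - K2 i)) \<and> (\<forall>i. P i - K1 i \<le> L i)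
      then G (\<lambda>i. L i - (P i - K1 i)) else (0::complex))"
proof -
  let ?M0 = "\<lambda>i. L i - (P i - K1 i)"
  let ?s = "((\<forall>i. K1 i \<le> P i) \<and> (\<forall>i. K2 i \<le> Q i) \<and> (\<lambda>i. P i - K1 i) = (\<lambda>i. Q i - K2 i)) \<and> (\<forall>i. P i - K1 i \<le> L i)"
  have fin: "finite {M::'i\<Rightarrow>nat. \<forall>i. M i \<le> L i \<and> M i \<le> L i}"
    by (rule finite_subset[OF _ finite_mdeg_le[of "mdeg L"]]) (auto intro: mdeg_le)
  have "(\<Sum>M\<in>{M. \<forall>i. M i \<le> L i \<and> M i \<le> L i}. if (\<lambda>i. K1 i + L i - M i) = P \<and> (\<lambda>i. L i - M i + K2 i) = Q then G M else 0)
      = (\<Sum>M\<in>{M. \<forall>i. M i \<le> L i \<and> M i \<le> L i}. if M = ?M0 then (if ?s then G M else 0) else 0)"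
  proof (rule sum.cong[OF refl])
    fix M assume "M \<in> {M::'i\<Rightarrow>nat. \<forall>i. M i \<le> L i \<and> M i \<le> L i}"
    then have "\<forall>i. M i \<le> L i" by simp
    from cond_M[OF this, of K1 P K2 Q] show "(if (\<lambda>i. K1 i + L i - M i) = P \<and> (\<lambda>i. L i - M i + K2 i) = Q then G M else 0)
      = (if M = ?M0 then (if ?s then G M else 0) else 0)" by simp
  qed
  also have "\<dots> = (if ?s then G ?M0 else 0)"
    using fin by (simp add: sum.delta)
  finally show ?thesis .
qed

definition TL :: "real \<Rightarrow> real \<Rightarrow> ('i::finite \<Rightarrow> nat) \<Rightarrow> ('i \<Rightarrow> nat) \<Rightarrow> complex" where
  "TL h r L N = (if \<forall>i. N i \<le> L i then complex_of_real (r^2 * h ^ mdeg (\<lambda>i. L i - N i)) / of_nat (mfact (\<lambda>i. L i - N i))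
      * (\<Prod>i\<in>UNIV. of_nat (fact (L i)) / of_nat (fact (N i)))^2 else 0)"

lemma wick_gL:
  fixes f :: "('i::finite) cpoly"
  assumes f: "f \<in> Pkl k 0"
  shows "wick h (cstar (gL f r L)) (gL f r L) = Sw f (TL h r L)"
proof (rule ext, clarify)
  fix P Q :: "'i \<Rightarrow> nat"
  let ?g = "gL f r L"
  have inj1: "inj_on (\<lambda>K. (K, L)) A" for A by (auto simp: inj_on_def)
  have inj2: "inj_on (\<lambda>K. (L, K)) A" for A by (auto simp: inj_on_def)
  have "wick h (cstar ?g) ?g (P,Q) = (\<Sum>a\<in>(\<lambda>K. (K,L)) ` FS f. \<Sum>b\<in>(\<lambda>K. (L,K)) ` FS f. wt h (cstar ?g) ?g P Q a b)"
    by (rule wick_superset) (simp_all add: finite_FS[OF f] supp_gL supp_cstar_gL)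
  also have "\<dots> = (\<Sum>K1\<in>FS f. \<Sum>K2\<in>FS f. wt h (cstar ?g) ?g P Q (K1,L) (L,K2))"
    by (simp add: sum.reindex[OF inj1] sum.reindex[OF inj2])
  also have "\<dots> = Sw f (TL h r L) (P,Q)"
    unfolding Sw_app
  proof (intro sum.cong refl)
    fix K1 K2
    let ?G = "\<lambda>M. complex_of_real (h ^ mdeg M) / of_nat (mfact M)
             * (\<Prod>i\<in>UNIV. of_nat (fact (L i)) / of_nat (fact (L i - M i)))
             * (\<Prod>i\<in>UNIV. of_nat (fact (L i)) / of_nat (fact (L i - M i)))
             * (complex_of_real r * f (K1, \<lambda>_. 0)) * (complex_of_real r * cnj (f (K2, \<lambda>_. 0)))"
    have "wt h (cstar ?g) ?g P Q (K1,L) (L,K2) = (\<Sum>M\<in>{M. \<forall>i. M i \<le> L i \<and> M i \<le> L i}.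
        if (\<lambda>i. K1 i + L i - M i) = P \<and> (\<lambda>i. L i - M i + K2 i) = Q then ?G M else 0)"
      unfolding wt_def by (simp add: cstar_app gL_app cong: if_cong)
    also have "\<dots> = (if ((\<forall>i. K1 i \<le> P i) \<and> (\<forall>i. K2 i \<le> Q i) \<and> (\<lambda>i. P i - K1 i) = (\<lambda>i. Q i - K2 i)) \<and> (\<forall>i. P i - K1 i \<le> L i)
      then ?G (\<lambda>i. L i - (P i - K1 i)) else 0)"
      by (rule wt_single)
    also have "\<dots> = (if (\<forall>i. K1 i \<le> P i) \<and> (\<forall>i. K2 i \<le> Q i) \<and> (\<lambda>i. P i - K1 i) = (\<lambda>i. Q i - K2 i)
     then f (K1, \<lambda>_. 0) * cnj (f (K2, \<lambda>_. 0)) * TL h r L (\<lambda>i. P i - K1 i) else 0)"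
    proof (cases "(\<forall>i. K1 i \<le> P i) \<and> (\<forall>i. K2 i \<le> Q i) \<and> (\<lambda>i. P i - K1 i) = (\<lambda>i. Q i - K2 i)")
      case c: True
      show ?thesis
      proof (cases "\<forall>i. P i - K1 i \<le> L i")
        case True
        have e: "L i - (L i - (P i - K1 i)) = P i - K1 i" for i using True by simp
        show ?thesis unfolding eqTrueI[OF c] eqTrueI[OF True] if_True simp_thms(21) TL_def e
          by (simp add: power2_eq_square algebra_simps of_real_mult)
      next
        case False
        show ?thesis unfolding eqTrueI[OF c] Eq_FalseI[OF False] if_True if_False simp_thms(21) TL_def by simp
      qed
    next
      case False
      show ?thesis unfolding Eq_FalseI[OF False] if_False simp_thms(23) by simp
    qed
    finally show "wt h (cstar ?g) ?g P Q (K1,L) (L,K2) = (if (\<forall>i. K1 i \<le> P i) \<and> (\<forall>i. K2 i \<le> Q i) \<and> (\<lambda>i. P i - K1 i) = (\<lambda>i. Q i - K2 i)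
     then f (K1, \<lambda>_. 0) * cnj (f (K2, \<lambda>_. 0)) * TL h r L (\<lambda>i. P i - K1 i) else 0)" .
  qed
  finally show "wick h (cstar ?g) ?g (P,Q) = Sw f (TL h r L) (P,Q)" .
qed

lemma pos_cone_sum:
  assumes "finite I" "\<And>x. x \<in> I \<Longrightarrow> g x \<in> Bset"
  shows "(\<lambda>m. \<Sum>x\<in>I. wick h (cstar (g x)) (g x) m) \<in> pos_cone h"
  using assms
proof (induction I rule: finite_induct)
  case empty
  show ?case using pos_cone.pc_zero by simp
next
  case (insert x F)
  have "(\<lambda>m. (\<lambda>m. \<Sum>x\<in>F. wick h (cstar (g x)) (g x) m) m + wick h (cstar (g x)) (g x) m) \<in> pos_cone h"
    by (rule pos_cone.pc_step) (use insert in auto)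
  then show ?case using insert(1,2) by (simp add: add.commute)
qed

lemma alt_sum:
  assumes "1 \<le> m"
  shows "(\<Sum>j\<le>k. (-1)^j * real (m choose (k - j))) = real ((m - 1) choose k)"
proof (induction k)
  case 0
  then show ?case by simp
next
  case (Suc k)
  have "(\<Sum>j\<le>Suc k. (-1)^j * real (m choose (Suc k - j)))
      = real (m choose Suc k) + (\<Sum>j\<le>k. (-1)^(Suc j) * real (m choose (Suc k - Suc j)))"
    by (subst sum.atMost_Suc_shift) simp
  also have "\<dots> = real (m choose Suc k) - (\<Sum>j\<le>k. (-1)^j * real (m choose (k - j)))"
    by (simp add: sum_negf)
  also have "\<dots> = real (m choose Suc k) - real ((m - 1) choose k)" using Suc by simp
  also have "m choose Suc k = ((m - 1) choose k) + ((m - 1) choose Suc k)"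
    using assms by (metis Suc_diff_le binomial_Suc_Suc diff_Suc_1)
  finally show ?case by simp
qed

lemma c_pos:
  assumes h: "h > 0" and kn: "k = 0 \<or> 2 \<le> n"
  shows "0 < h^k * (\<Sum>j\<le>k. (-1)^j * real ((k + n - 1) choose (k - j)))"
proof (cases "k = 0")
  case True then show ?thesis using h by simp
next
  case False
  then have n: "2 \<le> n" using kn by simp
  have "(\<Sum>j\<le>k. (-1)^j * real ((k + n - 1) choose (k - j))) = real ((k + n - 1 - 1) choose k)"
    by (rule alt_sum) (use n in simp)
  moreover have "0 < (k + n - 1 - 1) choose k" using n by (simp add: zero_less_binomial_iff)
  ultimately show ?thesis using h by simp
qed

lemma mfact_pos: "0 < mfact (N::'i::finite \<Rightarrow> nat)"
  unfolding mfact_def by (rule prod_pos) simp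

lemma mfact_split:
  fixes N L :: "'i::finite \<Rightarrow> nat"
  assumes "\<forall>i. N i \<le> L i"
  shows "real (mfact L) = real (mfact N) * real (mfact (\<lambda>i. L i - N i)) * (\<Prod>i\<in>UNIV. real (L i choose N i))"
proof -
  have "real (mfact L) = (\<Prod>i\<in>UNIV. real (fact (N i)) * real (fact (L i - N i)) * real (L i choose N i))"
    unfolding mfact_def of_nat_prod
  proof (rule prod.cong[OF refl])
    fix i
    have "fact (N i) * fact (L i - N i) * (L i choose N i) = (fact (L i) :: nat)"
      using assms by (simp add: binomial_fact_lemma)
    then show "real (fact (L i)) = real (fact (N i)) * real (fact (L i - N i)) * real (L i choose N i)"
      by (metis of_nat_mult)
  qed
  then show ?thesis by (simp add: prod.distrib mfact_def of_nat_prod)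
qed

lemma mdeg_diff:
  fixes N L :: "'i::finite \<Rightarrow> nat"
  assumes "\<forall>i. N i \<le> L i"
  shows "mdeg (\<lambda>i. L i - N i) = mdeg L - mdeg N"
proof -
  have "L = (\<lambda>i. N i + (L i - N i))" using assms by (intro ext) simp
  then have "mdeg L = mdeg N + mdeg (\<lambda>i. L i - N i)" by (metis mdeg_add)
  then show ?thesis by simp
qed

lemma TL_closed:
  fixes L N :: "'i::finite \<Rightarrow> nat"
  assumes c: "c > 0" and L: "mdeg L = k"
  shows "TL h (sqrt (1 / (c * real (mfact L)))) L N = complex_of_real (if \<forall>i. N i \<le> L i
       then h^(k - mdeg N) / (c * real (mfact N)) * (\<Prod>i\<in>UNIV. real (L i choose N i)) else 0)"
proof (cases "\<forall>i. N i \<le> L i")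
  case True
  let ?r = "sqrt (1 / (c * real (mfact L)))"
  have mL: "0 < real (mfact L)" "0 < real (mfact N)" "0 < real (mfact (\<lambda>i. L i - N i))"
    using mfact_pos by auto
  have r2: "?r^2 = 1 / (c * real (mfact L))" using c mL by simp
  have P: "(\<Prod>i\<in>UNIV. of_nat (fact (L i)) / of_nat (fact (N i)) :: complex)
      = complex_of_real (real (mfact L) / real (mfact N))"
    by (simp add: mfact_def prod_dividef of_nat_prod)
  have md: "mdeg (\<lambda>i. L i - N i) = k - mdeg N" using mdeg_diff[OF True] L by simp
  have "TL h ?r L N = complex_of_real (?r^2 * h ^ (k - mdeg N) / real (mfact (\<lambda>i. L i - N i))
      * (real (mfact L) / real (mfact N))^2)"
    unfolding TL_def if_P[OF True] P md by simp
  also have "?r^2 * h ^ (k - mdeg N) / real (mfact (\<lambda>i. L i - N i)) * (real (mfact L) / real (mfact N))^2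
     = h^(k - mdeg N) / (c * real (mfact N)) * (\<Prod>i\<in>UNIV. real (L i choose N i))"
    unfolding r2 using mL c mfact_split[OF True]
    by (simp add: field_simps power2_eq_square)
  finally show ?thesis using True by simp
next
  case False
  show ?thesis unfolding TL_def if_not_P[OF False] by simp
qed

lemma T_closed:
  fixes N :: "'i::finite \<Rightarrow> nat"
  assumes c: "c > 0"
  shows "(\<Sum>L\<in>{L. mdeg L = k}. TL h (sqrt (1 / (c * real (mfact L)))) L N)
    = complex_of_real (if mdeg N \<le> k then h^(k - mdeg N) * real ((k + card (UNIV::'i set) - 1) choose (k - mdeg N)) / (c * real (mfact N)) else 0)"
proof -
  have fin: "finite {L::'i \<Rightarrow> nat. mdeg L = k}" by (rule finite_subset[OF _ finite_mdeg_le[of k]]) auto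
  have "(\<Sum>L\<in>{L. mdeg L = k}. TL h (sqrt (1 / (c * real (mfact L)))) L N)
     = complex_of_real (\<Sum>L\<in>{L. mdeg L = k}. if \<forall>i. N i \<le> L i
       then h^(k - mdeg N) / (c * real (mfact N)) * (\<Prod>i\<in>UNIV. real (L i choose N i)) else 0)"
    unfolding of_real_sum by (intro sum.cong refl TL_closed[OF c]) simp
  also have "(\<Sum>L\<in>{L. mdeg L = k}. if \<forall>i. N i \<le> L i
       then h^(k - mdeg N) / (c * real (mfact N)) * (\<Prod>i\<in>UNIV. real (L i choose N i)) else 0)
     = h^(k - mdeg N) / (c * real (mfact N)) * (\<Sum>L\<in>{L. mdeg L = k \<and> (\<forall>i. N i \<le> L i)}. \<Prod>i\<in>UNIV. real (L i choose N i))"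
  proof -
    have e: "{L. mdeg L = k \<and> (\<forall>i. N i \<le> L i)} = {L \<in> {L. mdeg L = k}. \<forall>i. N i \<le> L i}" by auto
    show ?thesis unfolding e sum.inter_filter[OF fin] sum_distrib_left
      by (intro sum.cong refl) simp
  qed
  also have "\<dots> = (if mdeg N \<le> k then h^(k - mdeg N) * real ((k + card (UNIV::'i set) - 1) choose (k - mdeg N)) / (c * real (mfact N)) else 0)"
    unfolding Lsum by simp
  finally show ?thesis .
qed

lemma mfact_uv_split:
  fixes N :: "'i::finite \<Rightarrow> nat"
  assumes "1 \<le> N l"
  shows "real (mfact N) = real (N l) * real (mfact (\<lambda>i. N i - uv l i))"
proof -
  have "real (mfact N) = (\<Prod>i\<in>UNIV. (if i = l then real (N l) else 1) * real (fact (N i - uv l i)))"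
    unfolding mfact_def of_nat_prod
  proof (rule prod.cong[OF refl])
    fix i show "real (fact (N i)) = (if i = l then real (N l) else 1) * real (fact (N i - uv l i))"
    proof (cases "i = l")
      case True
      have "fact (N l) = N l * fact (N l - 1)" using assms by (simp add: fact_reduce)
      then show ?thesis using True by (simp add: uv_def)
    qed (simp add: uv_def)
  qed
  then show ?thesis by (simp add: prod.distrib mfact_def of_nat_prod)
qed

lemma mdeg_uv_split:
  fixes N :: "'i::finite \<Rightarrow> nat"
  assumes "1 \<le> N l"
  shows "mdeg (\<lambda>i. N i - uv l i) = mdeg N - 1"
proof -
  have "\<forall>i. uv l i \<le> N i" using assms by (simp add: uv_def)
  from mdeg_diff[OF this] show ?thesis by simp
qed

lemma Rop_closed:
  fixes N :: "'i::finite \<Rightarrow> nat"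
  shows "Rop h (\<lambda>N. complex_of_real (v (mdeg N) / real (mfact N))) N
     = complex_of_real ((real (mdeg N) * v (mdeg N - 1) + h * (real (mdeg N) + 1) * v (mdeg N)) / real (mfact N))"
proof -
  have mN: "0 < real (mfact N)" using mfact_pos by simp
  have "(\<Sum>l\<in>UNIV. if 1 \<le> N l then complex_of_real (v (mdeg (\<lambda>i. N i - uv l i)) / real (mfact (\<lambda>i. N i - uv l i))) else 0)
     = (\<Sum>l\<in>UNIV. complex_of_real (real (N l) * v (mdeg N - 1) / real (mfact N)))"
  proof (rule sum.cong[OF refl])
    fix l show "(if 1 \<le> N l then complex_of_real (v (mdeg (\<lambda>i. N i - uv l i)) / real (mfact (\<lambda>i. N i - uv l i))) else 0)
      = complex_of_real (real (N l) * v (mdeg N - 1) / real (mfact N))"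
    proof (cases "1 \<le> N l")
      case True
      have m2: "0 < real (mfact (\<lambda>i. N i - uv l i))" using mfact_pos by simp
      show ?thesis unfolding if_P[OF True] mdeg_uv_split[of N l, OF True] mfact_uv_split[of N l, OF True]
        using m2 True by (simp add: field_simps)
    qed simp
  qed
  also have "\<dots> = complex_of_real (real (mdeg N) * v (mdeg N - 1) / real (mfact N))"
    unfolding of_real_sum[symmetric] by (simp add: mdeg_def sum_divide_distrib[symmetric] sum_distrib_right[symmetric])
  finally show ?thesis unfolding Rop_def by (simp add: add_divide_distrib)
qed

lemma canc: "a \<noteq> 0 \<Longrightarrow> H \<noteq> 0 \<Longrightarrow> a * (X / (H * a)) = X / (H::real)"
  by (simp add: field_simps)

lemma scalar_rec:
  fixes h :: real and d :: "nat \<Rightarrow> real"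
  assumes h: "h > 0"
  defines "y \<equiv> \<lambda>j. \<Sum>i\<le>j. (-h)^i * d i"
  defines "v \<equiv> \<lambda>j. (-1)^j * y j / (h^(j+1) * (real j + 1))"
  shows "real j * v (j - 1) + h * (real j + 1) * v j = d j"
proof (cases j)
  case 0
  have "h * v 0 = y 0" unfolding v_def using h by simp
  then show ?thesis using 0 by (simp add: y_def)
next
  case (Suc m)
  have yS: "y j - y m = (-h)^j * d j" unfolding Suc y_def by simp
  have hp: "h^j \<noteq> 0" "h^(m+1) \<noteq> 0" using h by simp_all
  have A1: "real j * v (j - 1) = (real m + 1) * ((-1)^m * y m / (h^(m+1) * (real m + 1)))"
    unfolding Suc v_def diff_Suc_1 of_nat_Suc by (simp only: add.commute)
  have A2: "(real m + 1) * ((-1)^m * y m / (h^(m+1) * (real m + 1))) = (-1)^m * y m / h^(m+1)"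
    by (rule canc) (use hp in simp_all)
  have A3: "(-1)^m * y m / h^(m+1) = - ((-1)^j * y m / h^j)" by (simp add: Suc)
  have A: "real j * v (j - 1) = - ((-1)^j * y m / h^j)" using A1 A2 A3 by simp
  have B1: "(real j + 1) * ((-1)^j * y j / (h^(j+1) * (real j + 1))) = (-1)^j * y j / h^(j+1)"
    by (rule canc) (use h in simp_all)
  have B2: "h * ((-1)^j * y j / h^(j+1)) = (-1)^j * y j / h^j"
    using hp by (simp add: field_simps)
  have B: "h * (real j + 1) * v j = (-1)^j * y j / h^j"
    unfolding v_def by (simp only: mult.assoc B1 B2)
  have C: "(-1::real)^j * (-h)^j = h^j" by (simp add: power_mult_distrib[symmetric])
  have "real j * v (j - 1) + h * (real j + 1) * v j = (-1)^j * (y j - y m) / h^j"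
    unfolding A B by (simp add: diff_divide_distrib right_diff_distrib)
  also have "\<dots> = ((-1)^j * (-h)^j) * d j / h^j" unfolding yS by (simp only: mult.assoc)
  also have "\<dots> = d j" unfolding C using hp by simp
  finally show ?thesis .
qed

lemma general_case:
  fixes h :: real and k :: nat and f :: "('i::finite) cpoly"
  assumes h: "h > 0" and f: "f \<in> Pkl k 0" and kn: "k = 0 \<or> 2 \<le> card (UNIV::'i set)"
  shows "\<exists>p q. p \<in> herm (pos_cone h)
           \<and> q \<in> herm (star_ideal h (\<lambda>m. Jpoly m - complex_of_real (h * (real k - 1)) * one_poly m))
           \<and> pmult f (cstar f) = (\<lambda>m. p m + q m)"
proof -
  define n' where "n' = card (UNIV::'i set)"
  define \<beta> where "\<beta> j = real ((k + n' - 1) choose (k - j))" for j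
  define c where "c = h^k * (\<Sum>j\<le>k. (-1)^j * \<beta> j)"
  have cpos: "c > 0" using c_pos[OF h, of k n'] kn unfolding c_def \<beta>_def n'_def by simp
  define r where "r L = sqrt (1 / (c * real (mfact L)))" for L :: "'i \<Rightarrow> nat"
  define Ls where "Ls = {L::'i \<Rightarrow> nat. mdeg L = k}"
  have finLs: "finite Ls" unfolding Ls_def by (rule finite_subset[OF _ finite_mdeg_le[of k]]) auto
  define \<gamma> where "\<gamma> j = (if j \<le> k then h^(k - j) * \<beta> j / c else 0)" for j
  define T where "T N = complex_of_real (\<gamma> (mdeg N) / real (mfact N))" for N :: "'i \<Rightarrow> nat"
  have T_eq: "(\<Sum>L\<in>Ls. TL h (r L) L N) = T N" for N
  proof -
    have "(\<Sum>L\<in>Ls. TL h (r L) L N) = complex_of_real (if mdeg N \<le> k then h^(k - mdeg N) * real ((k + card (UNIV::'i set) - 1) choose (k - mdeg N)) / (c * real (mfact N)) else 0)"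
      unfolding Ls_def r_def by (rule T_closed[OF cpos])
    also have "\<dots> = T N" unfolding T_def \<gamma>_def \<beta>_def n'_def
      by (rule arg_cong[where f=complex_of_real]) (cases "mdeg N \<le> k", simp_all)
    finally show ?thesis .
  qed
  define \<delta> where "\<delta> j = (if j = 0 then 1 else 0) - \<gamma> j" for j
  define y where "y j = (\<Sum>i\<le>j. (-h)^i * \<delta> i)" for j
  define v where "v j = (-1)^j * y j / (h^(j+1) * (real j + 1))" for j
  define u where "u N = complex_of_real (v (mdeg N) / real (mfact N))" for N :: "'i \<Rightarrow> nat"
  have rec: "real j * v (j-1) + h * (real j + 1) * v j = \<delta> j" for j
    unfolding v_def y_def by (rule scalar_rec[OF h])
  have yk: "y j = 0" if "k \<le> j" for j
  proof -
    have s1: "(\<Sum>i\<le>j. (-h)^i * (if i = 0 then 1 else 0)) = (1::real)"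
    proof -
      have "(\<Sum>i\<le>j. (-h)^i * (if i = 0 then 1 else 0)) = (\<Sum>i\<le>j. if i = 0 then 1 else (0::real))"
        by (intro sum.cong refl) simp
      then show ?thesis by (simp add: sum.delta)
    qed
    have s2: "(\<Sum>i\<le>j. (-h)^i * \<gamma> i) = (\<Sum>i\<le>k. (-h)^i * \<gamma> i)"
      by (rule sum.mono_neutral_right) (use that in \<open>auto simp: \<gamma>_def\<close>)
    have s3: "(\<Sum>i\<le>k. (-h)^i * \<gamma> i) = (\<Sum>i\<le>k. h^k * ((-1)^i * \<beta> i)) / c"
      unfolding sum_divide_distrib
    proof (intro sum.cong refl)
      fix i assume "i \<in> {..k}"
      then have ik: "i \<le> k" by simp
      have hh: "h^i * h^(k-i) = h^k" using ik by (metis le_add_diff_inverse power_add)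
      have fact1: "(-h)^i * h^(k-i) = (-1)^i * h^k"
        unfolding power_minus[of h i] mult.assoc hh ..
      have "(-h)^i * \<gamma> i = (-h)^i * (h^(k-i) * \<beta> i / c)" unfolding \<gamma>_def using ik by simp
      also have "\<dots> = ((-h)^i * h^(k-i)) * \<beta> i / c" by (simp only: mult.assoc times_divide_eq_right)
      also have "\<dots> = h^k * ((-1)^i * \<beta> i) / c" unfolding fact1 by (simp only: mult_ac)
      finally show "(-h)^i * \<gamma> i = h^k * ((-1)^i * \<beta> i) / c" .
    qed
    have "(\<Sum>i\<le>k. h^k * ((-1)^i * \<beta> i)) = c" unfolding c_def sum_distrib_left ..
    then have s4: "(\<Sum>i\<le>k. h^k * ((-1)^i * \<beta> i)) / c = 1" using cpos by simp
    show ?thesis unfolding y_def \<delta>_def right_diff_distrib sum_subtractf s1 s2 s3 s4 by simp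
  qed
  have u_supp: "mdeg N \<le> k" if "u N \<noteq> 0" for N
  proof (rule ccontr)
    assume "\<not> mdeg N \<le> k"
    then have "y (mdeg N) = 0" using yk by simp
    then have "u N = 0" by (simp add: u_def v_def)
    then show False using that by simp
  qed
  have R_eq: "Rop h u N = delta0 N - T N" for N
  proof -
    have "Rop h u N = complex_of_real (\<delta> (mdeg N) / real (mfact N))"
      unfolding u_def Rop_closed rec ..
    also have "\<dots> = delta0 N - T N"
    proof (cases "N = (\<lambda>_. 0)")
      case True
      then show ?thesis by (simp add: delta0_def T_def \<delta>_def)
    next
      case False
      then have "mdeg N \<noteq> 0" using mdeg_zero_iff by blast
      then show ?thesis using False by (simp add: delta0_def T_def \<delta>_def)
    qed
    finally show ?thesis .
  qed
  define g where "g L = gL f (r L) L" for L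
  define p where "p = (\<lambda>m. \<Sum>L\<in>Ls. wick h (cstar (g L)) (g L) m)"
  have p_pos: "p \<in> pos_cone h"
    unfolding p_def by (rule pos_cone_sum[OF finLs]) (simp add: g_def Ls_def gL_Bset[OF f])
  have p_eq: "p = Sw f T"
  proof
    fix m
    have "p m = (\<Sum>L\<in>Ls. Sw f (TL h (r L) L) m)" unfolding p_def g_def wick_gL[OF f] ..
    also have "\<dots> = Sw f (\<lambda>N. \<Sum>L\<in>Ls. TL h (r L) L N) m" by (rule Sw_sum[OF finLs, symmetric])
    also have "\<dots> = Sw f T m" unfolding T_eq ..
    finally show "p m = Sw f T m" .
  qed
  have Tr: "cnj (T N) = T N" for N by (simp add: T_def)
  have p_herm: "cstar p = p" unfolding p_eq Sw_cstar Tr ..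
  define \<nu> where "\<nu> = h * (real k - 1)"
  define q where "q = wick h (Xp \<nu>) (Sw f u)"
  have q_eq: "q = Sw f (Rop h u)" unfolding q_def \<nu>_def by (rule Sw_X[OF f u_supp])
  have X_eq: "Xp \<nu> = (\<lambda>m. Jpoly m - complex_of_real (h * (real k - 1)) * one_poly m)"
    by (simp add: Xp_def \<nu>_def)
  have q_ideal: "q \<in> star_ideal h (\<lambda>m. Jpoly m - complex_of_real (h * (real k - 1)) * one_poly m)"
    unfolding q_def X_eq
    by (rule star_ideal.si_right[OF Sw_Bset[OF f u_supp] star_ideal.si_gen])
  have R_eq': "Rop h u = (\<lambda>N. delta0 N - T N)" using R_eq by (simp add: fun_eq_iff)
  have q_herm: "cstar q = q" unfolding q_eq Sw_cstar R_eq'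
    by (rule arg_cong[where f="Sw f"]) (simp add: fun_eq_iff delta0_def T_def)
  have sum_eq: "pmult f (cstar f) = (\<lambda>m. p m + q m)"
  proof
    fix m
    have "(\<lambda>N. T N + Rop h u N) = delta0" by (simp add: fun_eq_iff R_eq)
    then have "Sw f delta0 m = Sw f T m + Sw f (Rop h u) m" using Sw_add[of f T "Rop h u" m] by simp
    then show "pmult f (cstar f) m = p m + q m" unfolding pmult_Sw[OF f] p_eq q_eq .
  qed
  show ?thesis
    unfolding herm_def using p_pos p_herm q_ideal q_herm sum_eq by blast
qed

lemma pmult_formula:
  fixes f :: "('i::finite) cpoly"
  assumes f: "f \<in> Pkl k 0"
  shows "pmult f (cstar f) (P,Q) = f (P, \<lambda>_. 0) * cnj (f (Q, \<lambda>_. 0))"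
proof -
  have inj1: "inj_on (\<lambda>K. (K, \<lambda>_::'i. 0::nat)) A" for A by (auto simp: inj_on_def)
  have inj2: "inj_on (\<lambda>K. (\<lambda>_::'i. 0::nat, K)) A" for A by (auto simp: inj_on_def)
  have "pmult f (cstar f) (P,Q) = (\<Sum>K1\<in>FS f. \<Sum>K2\<in>FS f.
      if K1 = P \<and> K2 = Q then f (K1, \<lambda>_. 0) * cnj (f (K2, \<lambda>_. 0)) else 0)"
    unfolding pmult_def supp_f[OF f] supp_cstar_f[OF f]
    apply (simp add: sum.reindex[OF inj1] sum.reindex[OF inj2])
    apply (intro sum.cong refl)
    apply (simp add: cstar_app)
    done
  also have "\<dots> = (\<Sum>K1\<in>FS f. if K1 = P then (\<Sum>K2\<in>FS f.
      if K2 = Q then f (K1, \<lambda>_. 0) * cnj (f (K2, \<lambda>_. 0)) else 0) else 0)"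
    by (intro sum.cong refl) auto
  also have "\<dots> = (if P \<in> FS f then (if Q \<in> FS f then f (P, \<lambda>_. 0) * cnj (f (Q, \<lambda>_. 0)) else 0) else 0)"
    using finite_FS[OF f] by (simp add: sum.delta cong: if_cong)
  also have "\<dots> = f (P, \<lambda>_. 0) * cnj (f (Q, \<lambda>_. 0))"
    by (auto simp: FS_def)
  finally show ?thesis .
qed

lemma special_case:
  fixes h :: real and k :: nat and f :: "('i::finite) cpoly"
  assumes f: "f \<in> Pkl k 0" and k1: "1 \<le> k" and c1: "card (UNIV::'i set) = 1"
  shows "\<exists>p q. p \<in> herm (pos_cone h)
           \<and> q \<in> herm (star_ideal h (\<lambda>m. Jpoly m - complex_of_real (h * (real k - 1)) * one_poly m))
           \<and> pmult f (cstar f) = (\<lambda>m. p m + q m)"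
proof -
  obtain i0 :: 'i where U: "UNIV = {i0}" using c1 card_1_singletonE by blast
  have all: "i = i0" for i using U by auto
  have feq: "(A::'i \<Rightarrow> nat) = B \<longleftrightarrow> A i0 = B i0" for A B
    by (metis all ext)
  have md: "mdeg (K::'i \<Rightarrow> nat) = K i0" for K unfolding mdeg_def U by simp
  have uv0: "uv i0 i = 1" for i using all by (simp add: uv_def)
  define a :: "'i cpoly" where "a = (\<lambda>(A,B). f ((\<lambda>i. A i + 1), \<lambda>_. 0) * cnj (f ((\<lambda>i. B i + 1), \<lambda>_. 0)))"
  have a_app: "a (A,B) = f ((\<lambda>i. A i + 1), \<lambda>_. 0) * cnj (f ((\<lambda>i. B i + 1), \<lambda>_. 0))" for A B
    by (simp add: a_def)
  have a_nz: "(\<lambda>i. A i + 1) \<in> FS f \<and> (\<lambda>i. B i + 1) \<in> FS f" if "a (A,B) \<noteq> 0" for A B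
    using that by (auto simp: a_app FS_def)
  have supp_a: "supp a \<subseteq> (\<lambda>(K1,K2). ((\<lambda>i. K1 i - 1), (\<lambda>i. K2 i - 1))) ` (FS f \<times> FS f)"
  proof
    fix m assume "m \<in> supp a"
    then obtain A B where m: "m = (A,B)" "a (A,B) \<noteq> 0" by (cases m) (auto simp: supp_def)
    have mem: "((\<lambda>i. A i + 1), (\<lambda>i. B i + 1)) \<in> FS f \<times> FS f" using a_nz[OF m(2)] by simp
    show "m \<in> (\<lambda>(K1,K2). ((\<lambda>i. K1 i - 1), (\<lambda>i. K2 i - 1))) ` (FS f \<times> FS f)"
      by (rule rev_image_eqI[OF mem]) (simp add: m)
  qed
  have fin_a: "finite (supp a)"
    by (rule finite_subset[OF supp_a]) (simp add: finite_FS[OF f])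
  have a_B: "a \<in> Bset"
    unfolding Bset_def
  proof (intro CollectI conjI allI impI fin_a)
    fix A B assume "a (A,B) \<noteq> 0"
    then have "mdeg (\<lambda>i. A i + 1) = k" "mdeg (\<lambda>i. B i + 1) = k" using a_nz FS_mdeg[OF f] by blast+
    then show "mdeg A = mdeg B" unfolding md by simp
  qed
  have a_herm: "cstar a = a" by (simp add: fun_eq_iff cstar_app a_app mult.commute)
  define q where "q = wick h (Xp (h * (real k - 1))) a"
  have q_eq: "q = pmult f (cstar f)"
  proof (rule ext, clarify)
    fix P Q :: "'i \<Rightarrow> nat"
    have "q (P,Q) = (\<Sum>l\<in>UNIV. if 1 \<le> P l \<and> 1 \<le> Q l then a (\<lambda>i. P i - uv l i, \<lambda>i. Q i - uv l i) else 0)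
          + complex_of_real (h * real (mdeg P) - h * (real k - 1)) * a (P,Q)"
      unfolding q_def by (rule wick_Xp[OF fin_a])
    also have "(\<Sum>l\<in>UNIV. if 1 \<le> P l \<and> 1 \<le> Q l then a (\<lambda>i. P i - uv l i, \<lambda>i. Q i - uv l i) else 0)
        = f (P, \<lambda>_. 0) * cnj (f (Q, \<lambda>_. 0))"
    proof -
      have "(\<Sum>l\<in>UNIV. if 1 \<le> P l \<and> 1 \<le> Q l then a (\<lambda>i. P i - uv l i, \<lambda>i. Q i - uv l i) else 0)
         = (if 1 \<le> P i0 \<and> 1 \<le> Q i0 then a (\<lambda>i. P i - uv i0 i, \<lambda>i. Q i - uv i0 i) else 0)"
        unfolding U by simp
      also have "\<dots> = f (P, \<lambda>_. 0) * cnj (f (Q, \<lambda>_. 0))"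
      proof (cases "1 \<le> P i0 \<and> 1 \<le> Q i0")
        case True
        have "(\<lambda>i. P i - uv i0 i + 1) = P" "(\<lambda>i. Q i - uv i0 i + 1) = Q"
          using True by (simp_all add: feq uv0)
        then show ?thesis using True by (simp add: a_app)
      next
        case False
        have "f (P, \<lambda>_. 0) = 0 \<or> f (Q, \<lambda>_. 0) = 0"
        proof (rule ccontr)
          assume "\<not> (f (P, \<lambda>_. 0) = 0 \<or> f (Q, \<lambda>_. 0) = 0)"
          then have "mdeg P = k" "mdeg Q = k" using Pkl_f[OF f] by blast+
          then show False using False k1 unfolding md by simp
        qed
        then show ?thesis using False by auto
      qed
      finally show ?thesis .
    qed
    also have "complex_of_real (h * real (mdeg P) - h * (real k - 1)) * a (P,Q) = 0"
    proof (cases "a (P,Q) = 0")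
      case False
      then have "mdeg (\<lambda>i. P i + 1) = k" using a_nz FS_mdeg[OF f] by blast
      then have "real (mdeg P) = real k - 1" unfolding md using k1 by simp
      then show ?thesis by simp
    qed simp
    finally show "q (P,Q) = pmult f (cstar f) (P,Q)" by (simp add: pmult_formula[OF f])
  qed
  have q_ideal: "q \<in> star_ideal h (\<lambda>m. Jpoly m - complex_of_real (h * (real k - 1)) * one_poly m)"
    unfolding q_def Xp_def by (rule star_ideal.si_right[OF a_B star_ideal.si_gen])
  have q_herm: "cstar q = q"
    unfolding q_eq by (simp add: fun_eq_iff cstar_app pmult_formula[OF f] mult.commute)
  have p0: "(\<lambda>_. 0) \<in> pos_cone h" by (rule pos_cone.pc_zero)
  have p0h: "cstar (\<lambda>_. 0) = (\<lambda>_::'i mon. 0::complex)" by (simp add: fun_eq_iff cstar_app)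
  show ?thesis
    unfolding herm_def using p0 p0h q_ideal q_herm q_eq by auto
qed

theorem lemma5p10:
  fixes h :: real and k :: nat and f :: "('i::finite) cpoly"
  assumes "h > 0" and "f \<in> Pkl k 0"
  shows "\<exists>p q. p \<in> herm (pos_cone h)
           \<and> q \<in> herm (star_ideal h (\<lambda>m. Jpoly m - complex_of_real (h * (real k - 1)) * one_poly m))
           \<and> pmult f (cstar f) = (\<lambda>m. p m + q m)"
proof (cases "k = 0 \<or> 2 \<le> card (UNIV::'i set)")
  case True
  then show ?thesis by (rule general_case[OF assms])
next
  case False
  have "card (UNIV::'i set) > 0" using finite_UNIV_card_ge_0 finite_UNIV by blast
  then have "card (UNIV::'i set) = 1" "1 \<le> k" using False by linarith+
  then show ?thesis using special_case[OF assms(2)] by blast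
qed

end
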